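(* Let $\alpha\in\mathbb N$, $\alpha\ge2$, and $\gamma>0$. Then $\mathcal H(K^{\cos}_{\alpha,\gamma})\subseteq\mathcal H(K^{\rm sob}_{\alpha,\gamma})$ and for every $f\in\mathcal H(K^{\cos}_{\alpha,\gamma})$, $$\|f\|_{K^{\rm sob}_{\alpha,\gamma}}\le\left(\frac{\pi^{2(\alpha+1)}-1}{\pi^2-1}\right)^{1/2}\|f\|_{K^{\cos}_{\alpha,\gamma}}.$$ Moreover the function $x\mapsto x$ lies in $\mathcal H(K^{\rm sob}_{\alpha,\gamma})$ but not in $\mathcal H(K^{\cos}_{\alpha,\gamma})$ (indeed it is not in $\mathcal H(K^{\cos}_{\alpha,\gamma})$ for any real $\alpha\ge3/2$).
   Context: $r_{\alpha,\gamma}(0)=1$, $r_{\alpha,\gamma}(k)=\gamma|k|^{-2\alpha}$ for $k\neq0$. Cosine coefficients: $\tilde f_{\cos}(0)=\int_0^1f$, $\tilde f_{\cos}(k)=\int_0^1f(x)\sqrt2\cos(\pi kx)\,dx$ for $k\ge1$. $\mathcal H(K^{\cos}_{\alpha,\gamma})$ is the space of functions with $\|f\|^2_{K^{\cos}_{\alpha,\gamma}}=\sum_{k\ge0}|\tilde f_{\cos}(k)|^2r_{\alpha,\gamma}(k)^{-1}<\infty$ (reproducing kernel $1+\sum_{k\ge1}r_{\alpha,\gamma}(k)2\cos(\pi kx)\cos(\pi ky)$). $\mathcal H(K^{\rm sob}_{\alpha,\gamma})$ is the Sobolev space with inner product $\langle f,g\rangle=\int_0^1f\int_0^1g+\frac1\gamma\sum_{\tau=1}^{\alpha-1}\int_0^1f^{(\tau)}\int_0^1g^{(\tau)}+\frac1\gamma\int_0^1f^{(\alpha)}g^{(\alpha)}$.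 *)

theory Defs
  imports "HOL-Analysis.Analysis"
begin

definition r_weight :: "real \<Rightarrow> real \<Rightarrow> nat \<Rightarrow> real" where
  "r_weight \<alpha> \<gamma> k = (if k = 0 then 1 else \<gamma> * (real k) powr (- 2 * \<alpha>))"

definition cos_basis :: "nat \<Rightarrow> real \<Rightarrow> real" where
  "cos_basis k x = (if k = 0 then 1 else sqrt 2 * cos (pi * real k * x))"

definition cos_coeff :: "(real \<Rightarrow> real) \<Rightarrow> nat \<Rightarrow> real" where
  "cos_coeff f k = (LINT x:{0..1}|lborel. f x * cos_basis k x)"

definition H_cos :: "real \<Rightarrow> real \<Rightarrow> (real \<Rightarrow> real) set" where
  "H_cos \<alpha> \<gamma> = {f. \<exists>c::nat \<Rightarrow> real.
      summable (\<lambda>k. (c k)\<^sup>2 / r_weight \<alpha> \<gamma> k) \<and>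
      (\<forall>x\<in>{0..1}. (\<lambda>k. c k * cos_basis k x) sums f x)}"

definition cos_norm :: "real \<Rightarrow> real \<Rightarrow> (real \<Rightarrow> real) \<Rightarrow> real" where
  "cos_norm \<alpha> \<gamma> f = sqrt (\<Sum>k. (cos_coeff f k)\<^sup>2 / r_weight \<alpha> \<gamma> k)"

text \<open>D is a family of derivatives of f of orders 0..alpha on [0,1]:
  D 0 = f, D tau is differentiable with derivative D (tau+1) for tau < alpha-1,
  D (alpha-1) is absolutely continuous with a.e. derivative D alpha, and
  D alpha is square integrable on [0,1].\<close>
definition sob_derivs :: "nat \<Rightarrow> (real \<Rightarrow> real) \<Rightarrow> (nat \<Rightarrow> real \<Rightarrow> real) \<Rightarrow> bool" where
  "sob_derivs \<alpha> f D \<longleftrightarrow>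
     (\<forall>x\<in>{0..1}. D 0 x = f x) \<and>
     (\<forall>\<tau><\<alpha> - 1. \<forall>x\<in>{0..1}.
         (D \<tau> has_real_derivative D (Suc \<tau>) x) (at x within {0..1})) \<and>
     D \<alpha> \<in> borel_measurable lborel \<and>
     set_integrable lborel {0..1} (\<lambda>x. (D \<alpha> x)\<^sup>2) \<and>
     (\<forall>x\<in>{0..1}. D (\<alpha> - 1) x = D (\<alpha> - 1) 0 + (LINT t:{0..x}|lborel. D \<alpha> t))"

definition H_sob :: "nat \<Rightarrow> (real \<Rightarrow> real) set" where
  "H_sob \<alpha> = {f. \<exists>D. sob_derivs \<alpha> f D}"

text \<open>Sobolev norm (independent of the choice of derivative family).\<close>
definition sob_norm :: "nat \<Rightarrow> real \<Rightarrow> (real \<Rightarrow> real) \<Rightarrow> real" where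
  "sob_norm \<alpha> \<gamma> f = (let D = (SOME D. sob_derivs \<alpha> f D) in
     sqrt ((LINT x:{0..1}|lborel. f x)\<^sup>2
       + (1 / \<gamma>) * (\<Sum>\<tau>=1..\<alpha>-1. (LINT x:{0..1}|lborel. D \<tau> x)\<^sup>2)
       + (1 / \<gamma>) * (LINT x:{0..1}|lborel. (D \<alpha> x)\<^sup>2)))"

end

theory Submission
  imports Defs
begin


definition ee :: "nat \<Rightarrow> nat \<Rightarrow> real \<Rightarrow> real" where
  "ee j k x = (if k = 0 then (if j = 0 then 1 else 0)
      else sqrt 2 * (pi * real k) ^ j * cos (pi * real k * x + real j * pi / 2))"

lemma ee0: "ee 0 k x = cos_basis k x"
  by (simp add: ee_def cos_basis_def)

lemma ee_deriv: "(ee j k has_real_derivative ee (Suc j) k x) (at x within S)"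
proof (cases "k = 0")
  case True
  have "ee j k = (\<lambda>_. if j = 0 then 1 else 0)" using True by (auto simp: ee_def fun_eq_iff)
  then show ?thesis using True by (simp add: ee_def)
next
  case False
  have "((\<lambda>x. sqrt 2 * (pi * real k) ^ j * cos (pi * real k * x + real j * pi / 2)) has_real_derivative
        sqrt 2 * (pi * real k) ^ j * (- sin (pi * real k * x + real j * pi / 2) * (pi * real k))) (at x within S)"
    by (auto intro!: derivative_eq_intros)
  moreover have c: "- sin (pi * real k * x + real j * pi / 2) = cos (pi * real k * x + real (Suc j) * pi / 2)"
  proof -
    have "pi * real k * x + real (Suc j) * pi / 2 = (pi * real k * x + real j * pi / 2) + pi/2"
      by (simp add: field_simps)
    then show ?thesis by (simp only:) (simp add: cos_add)
  qed
  moreover have "ee j k = (\<lambda>x. sqrt 2 * (pi * real k) ^ j * cos (pi * real k * x + real j * pi / 2))"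
    using False by (auto simp: ee_def fun_eq_iff)
  moreover have "ee (Suc j) k x = sqrt 2 * (pi * real k) ^ j * (- sin (pi * real k * x + real j * pi / 2) * (pi * real k))"
    using False by (simp only: ee_def c) (simp add: mult_ac)
  ultimately show ?thesis by simp
qed

lemma ee_cont: "continuous_on S (ee j k)"
proof (cases "k = 0")
  case True
  have "ee j k = (\<lambda>_. if j = 0 then 1 else 0)" using True by (auto simp: ee_def fun_eq_iff)
  then show ?thesis by simp
next
  case False
  then have "ee j k = (\<lambda>x. sqrt 2 * (pi * real k) ^ j * cos (pi * real k * x + real j * pi / 2))"
    by (auto simp: ee_def fun_eq_iff)
  then show ?thesis by (auto intro!: continuous_intros)
qed

lemma ee_bound: "\<bar>ee j k x\<bar> \<le> 2 * pi ^ j * real k ^ j + 1"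
proof (cases "k = 0")
  case True then show ?thesis by (simp add: ee_def)
next
  case False
  have "\<bar>ee j k x\<bar> = sqrt 2 * (pi * real k) ^ j * \<bar>cos (pi * real k * x + real j * pi / 2)\<bar>"
    using False by (simp add: ee_def abs_mult)
  also have "\<dots> \<le> sqrt 2 * (pi * real k) ^ j * 1"
    by (intro mult_left_mono) auto
  also have "\<dots> \<le> 2 * (pi * real k) ^ j"
    using sqrt2_less_2 by (simp add: mult_right_mono)
  finally show ?thesis by (simp add: power_mult_distrib)
qed

lemma ee_bound1: "k \<ge> 1 \<Longrightarrow> \<bar>ee j k x\<bar> \<le> 2 * pi ^ j * real k ^ j"
proof -
  assume "k \<ge> 1"
  have "\<bar>ee j k x\<bar> = sqrt 2 * (pi * real k) ^ j * \<bar>cos (pi * real k * x + real j * pi / 2)\<bar>"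
    using \<open>k\<ge>1\<close> by (simp add: ee_def abs_mult)
  also have "\<dots> \<le> sqrt 2 * (pi * real k) ^ j * 1"
    by (intro mult_left_mono) auto
  also have "\<dots> \<le> 2 * (pi * real k) ^ j"
    using sqrt2_less_2 by (simp add: mult_right_mono)
  finally show ?thesis by (simp add: power_mult_distrib)
qed



lemma FTC_Icc:
  fixes f F :: "real \<Rightarrow> real"
  assumes "a \<le> b" "\<And>x. (F has_real_derivative f x) (at x)" "continuous_on {a..b} f"
  shows "(LINT x:{a..b}|lborel. f x) = F b - F a"
proof -
  have "(LBINT x=a..b. f x) = F b - F a"
    by (rule interval_integral_FTC_finite)
       (use assms in \<open>auto simp: has_real_derivative_iff_has_vector_derivative[symmetric]
          intro: has_field_derivative_at_within\<close>)
  then show ?thesis using assms(1) by (simp add: interval_integral_Icc)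
qed

lemma sin_int_pi: "sin (pi * of_int p) = 0"
  by (simp add: sin_zero_iff_int2)

lemma int_cos_zero:
  fixes p q :: int
  assumes "p \<noteq> 0"
  shows "(LINT x:{0..1}|lborel. cos (pi * of_int p * x + pi * of_int q)) = 0"
proof -
  have "(LINT x:{0..1}|lborel. cos (pi * of_int p * x + pi * of_int q))
      = sin (pi * of_int p * 1 + pi * of_int q) / (pi * of_int p) - sin (pi * of_int p * 0 + pi * of_int q) / (pi * of_int p)"
    by (rule FTC_Icc) (use assms in \<open>auto intro!: derivative_eq_intros continuous_intros\<close>)
  also have "sin (pi * of_int p * 1 + pi * of_int q) = 0"
    using sin_int_pi[of "p+q"] by (simp add: distrib_left)
  also have "sin (pi * of_int p * 0 + pi * of_int q) = 0"
    using sin_int_pi[of q] by simp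
  finally show ?thesis by simp
qed

lemma int_cont: "continuous_on {a..b} f \<Longrightarrow> set_integrable lborel {a..b} (f :: real \<Rightarrow> real)"
  by (rule borel_integrable_atLeastAtMost')

lemma int_one: "(LINT (x::real):{0..1}|lborel. (1::real)) = 1"
  by (subst set_integral_const) (auto simp: measure_lborel_Icc emeasure_lborel_Icc)

lemma ortho:
  "(LINT x:{0..1}|lborel. ee j k x * ee j m x) =
     (if k = m then (if k = 0 then (if j = 0 then 1 else 0) else (pi * real k) ^ (2 * j)) else 0)"
proof -
  consider "k = 0" "m = 0" | "k = 0" "m \<noteq> 0" | "k \<noteq> 0" "m = 0" | "k \<noteq> 0" "m \<noteq> 0" by blast
  then show ?thesis
  proof cases
    case 1 then show ?thesis using int_one by (auto simp: ee_def)
  next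
    case 2
    have "(LINT x:{0..1}|lborel. cos (pi * of_int (int m) * x + pi * of_int 0)) = 0"
      by (rule int_cos_zero) (use 2 in auto)
    then show ?thesis using 2 by (simp add: ee_def)
  next
    case 3
    have "(LINT x:{0..1}|lborel. cos (pi * of_int (int k) * x + pi * of_int 0)) = 0"
      by (rule int_cos_zero) (use 3 in auto)
    then show ?thesis using 3 by (simp add: ee_def)
  next
    case 4
    define C where "C = (pi * real k) ^ j * (pi * real m) ^ j"
    have eq: "ee j k x * ee j m x = C * (cos (pi * of_int (int k - int m) * x + pi * of_int 0)
              + cos (pi * of_int (int k + int m) * x + pi * of_int (int j)))" for x
    proof -
      have "ee j k x * ee j m x = 2 * C * (cos (pi * real k * x + real j * pi / 2) * cos (pi * real m * x + real j * pi / 2))"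
        using 4 by (simp add: ee_def C_def mult_ac)
      also have "\<dots> = C * (cos (pi * real k * x + real j * pi / 2 - (pi * real m * x + real j * pi / 2))
            + cos (pi * real k * x + real j * pi / 2 + (pi * real m * x + real j * pi / 2)))"
        by (simp add: cos_times_cos)
      also have "pi * real k * x + real j * pi / 2 - (pi * real m * x + real j * pi / 2) = pi * of_int (int k - int m) * x + pi * of_int 0"
        by (simp add: algebra_simps)
      also have "pi * real k * x + real j * pi / 2 + (pi * real m * x + real j * pi / 2) = pi * of_int (int k + int m) * x + pi * of_int (int j)"
        by (simp add: algebra_simps)
      finally show ?thesis .
    qed
    have I2: "(LINT x:{0..1}|lborel. cos (pi * of_int (int k + int m) * x + pi * of_int (int j))) = 0"
      by (rule int_cos_zero) (use 4 in auto)
    have "(LINT x:{0..1}|lborel. ee j k x * ee j m x) = C * ((LINT x:{0..1}|lborel. cos (pi * of_int (int k - int m) * x + pi * of_int 0))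
         + (LINT x:{0..1}|lborel. cos (pi * of_int (int k + int m) * x + pi * of_int (int j))))"
      unfolding eq
      by (subst set_integral_mult_right, subst set_integral_add) (auto intro!: int_cont continuous_intros)
    also note I2
    finally have *: "(LINT x:{0..1}|lborel. ee j k x * ee j m x) =
       C * (LINT x:{0..1}|lborel. cos (pi * of_int (int k - int m) * x + pi * of_int 0))" by simp
    show ?thesis
    proof (cases "k = m")
      case True
      have "(LINT x:{0..1}|lborel. cos (pi * of_int (int k - int m) * x + pi * of_int 0)) = (LINT (x::real):{0..1}|lborel. (1::real))"
        using True by simp
      also have "\<dots> = 1" by (rule int_one)
      finally show ?thesis using * True 4 by (simp add: C_def power_mult_distrib power_mult power2_eq_square)
    next
      case False
      have "(LINT x:{0..1}|lborel. cos (pi * of_int (int k - int m) * x + pi * of_int 0)) = 0"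
        by (rule int_cos_zero) (use False in auto)
      then show ?thesis using * False by simp
    qed
  qed
qed



lemma amgm_k: fixes u :: real and k :: nat assumes "k \<ge> 1" "u \<ge> 0"
  shows "u / real k \<le> u\<^sup>2 + inverse (real k ^ 2)"
proof -
  have "0 \<le> (u - 1 / real k)\<^sup>2" by simp
  moreover have "(u - 1 / real k)\<^sup>2 = u\<^sup>2 - 2 * (u / real k) + inverse (real k ^ 2)"
    using assms by (simp add: power2_diff field_simps power2_eq_square)
  ultimately have "2 * (u / real k) \<le> u\<^sup>2 + inverse (real k ^ 2)" by linarith
  moreover have "u / real k \<ge> 0" using assms by simp
  ultimately show ?thesis by linarith
qed

locale cs =
  fixes a :: nat and c :: "nat \<Rightarrow> real"
  assumes a2: "a \<ge> 2" and sumA: "summable (\<lambda>k. (c k)\<^sup>2 * real k ^ (2 * a))"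
begin

lemma summable_abs_pow:
  assumes "j \<le> a - 1"
  shows "summable (\<lambda>k. \<bar>c k\<bar> * real k ^ j)"
proof (rule summable_comparison_test_ev)
  have inv: "summable (\<lambda>k. inverse (real k ^ 2))"
    by (rule inverse_power_summable) simp
  show "summable (\<lambda>k. (c k)\<^sup>2 * real k ^ (2 * a) + inverse (real k ^ 2))"
    by (intro summable_add sumA inv)
  show "\<forall>\<^sub>F k in sequentially. norm (\<bar>c k\<bar> * real k ^ j) \<le> (c k)\<^sup>2 * real k ^ (2 * a) + inverse (real k ^ 2)"
    using eventually_ge_at_top[of "1::nat"]
  proof eventually_elim
    case (elim k)
    have kpos: "real k \<ge> 1" using elim by simp
    have "\<bar>c k\<bar> * real k ^ j \<le> \<bar>c k\<bar> * real k ^ (a - 1)"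
      using assms kpos by (intro mult_left_mono power_increasing) auto
    also have "real k ^ (a - 1) = real k ^ a / real k"
      using a2 kpos by (simp add: power_diff)
    also have "\<bar>c k\<bar> * (real k ^ a / real k) = (\<bar>c k\<bar> * real k ^ a) / real k" by simp
    also have "\<dots> \<le> (\<bar>c k\<bar> * real k ^ a)\<^sup>2 + inverse (real k ^ 2)"
      by (rule amgm_k) (use elim in auto)
    also have "(\<bar>c k\<bar> * real k ^ a)\<^sup>2 = (c k)\<^sup>2 * real k ^ (2 * a)"
      by (simp add: power_mult_distrib power_mult[symmetric] mult.commute)
    finally show ?case by simp
  qed
qed

definition M :: "nat \<Rightarrow> nat \<Rightarrow> real" where
  "M j k = \<bar>c k\<bar> * (2 * pi ^ j * real k ^ j + 1)"

lemma summable_M: "j \<le> a - 1 \<Longrightarrow> summable (M j)"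
proof -
  assume j: "j \<le> a - 1"
  have "summable (\<lambda>k. (2 * pi ^ j) * (\<bar>c k\<bar> * real k ^ j) + \<bar>c k\<bar>)"
    using summable_abs_pow[OF j] summable_abs_pow[of 0]
    by (intro summable_add summable_mult) auto
  then show ?thesis unfolding M_def by (simp add: algebra_simps)
qed

lemma M_bound: "\<bar>c k * ee j k x\<bar> \<le> M j k"
  unfolding M_def by (simp add: abs_mult mult_left_mono ee_bound)

definition F :: "nat \<Rightarrow> real \<Rightarrow> real" where
  "F j x = (\<Sum>k. c k * ee j k x)"

lemma F_summable: "j \<le> a - 1 \<Longrightarrow> summable (\<lambda>k. c k * ee j k x)"
  by (rule summable_comparison_test[OF _ summable_M]) (auto intro: M_bound)

lemma F_sums: "j \<le> a - 1 \<Longrightarrow> (\<lambda>k. c k * ee j k x) sums F j x"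
  unfolding F_def by (rule summable_sums[OF F_summable])

lemma F_unif: "j \<le> a - 1 \<Longrightarrow> uniform_limit S (\<lambda>n x. \<Sum>i<n. c i * ee j i x) (F j) sequentially"
  unfolding F_def[abs_def]
  by (rule Weierstrass_m_test[OF _ summable_M]) (auto intro: M_bound)

lemma F_cont: "j \<le> a - 1 \<Longrightarrow> continuous_on S (F j)"
  by (rule uniform_limit_theorem[OF _ F_unif])
     (auto intro!: always_eventually continuous_intros continuous_on_mult continuous_on_const ee_cont)

lemma F_deriv:
  assumes "j < a - 1"
  shows "(F j has_real_derivative F (Suc j) x) (at x within S)"
proof -
  have "\<exists>g. \<forall>x\<in>UNIV. (\<lambda>n. c n * ee j n x) sums g x \<and> (g has_field_derivative F (Suc j) x) (at x within UNIV)"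
    by (rule has_field_derivative_series[where ?x0.0=0])
       (use assms in \<open>auto intro!: F_unif DERIV_cmult ee_deriv F_summable\<close>)
  then obtain g where g: "\<And>x. (\<lambda>n. c n * ee j n x) sums g x" "\<And>x. (g has_field_derivative F (Suc j) x) (at x)"
    by auto
  have "g = F j" using g(1) F_sums[of j] assms by (auto simp: fun_eq_iff intro: sums_unique2)
  then show ?thesis using g(2) by (auto intro: has_field_derivative_at_within)
qed

end


lemma termwise_int:
  fixes u :: "nat \<Rightarrow> real \<Rightarrow> real"
  assumes cont: "\<And>k. continuous_on {0..1} (u k)"
    and bd: "\<And>k x. x \<in> {0..1} \<Longrightarrow> \<bar>u k x\<bar> \<le> Mb k" and sM: "summable Mb"
  shows "(\<lambda>k. LINT x:{0..1}|lborel. u k x) sums (LINT x:{0..1}|lborel. (\<Sum>k. u k x))"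
proof -
  define f where "f k x = indicator {0..1::real} x * u k x" for k x
  have int: "integrable lborel (f k)" for k
    unfolding f_def using int_cont[OF cont[of k]] by (simp add: set_integrable_def)
  have fb: "\<bar>f k x\<bar> \<le> indicator {0..1} x * Mb k" for k x
    using bd[of x k] by (auto simp: f_def indicator_def)
  have Mnn: "Mb k \<ge> 0" for k using bd[of 0 k] by auto
  have "(\<lambda>i. integral\<^sup>L lborel (f i)) sums (\<integral>x. (\<Sum>i. f i x) \<partial>lborel)"
  proof (rule sums_integral)
    show "integrable lborel (f i)" for i by (rule int)
    show "AE x in lborel. summable (\<lambda>i. norm (f i x))"
      by (intro AE_I2, rule summable_comparison_test[OF _ summable_mult[OF sM, of "indicator {0..1} x" for x]])
         (use fb in \<open>auto simp: mult.commute\<close>)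
    have "(\<integral>x. norm (f i x) \<partial>lborel) \<le> Mb i" for i
    proof -
      have "(\<integral>x. norm (f i x) \<partial>lborel) \<le> (\<integral>x. indicator {0..1::real} x * Mb i \<partial>lborel)"
        by (rule Bochner_Integration.integral_mono) (use int fb in \<open>auto intro!: integrable_real_mult_indicator\<close>)
      also have "\<dots> = Mb i" by simp
      finally show ?thesis .
    qed
    then show "summable (\<lambda>i. \<integral>x. norm (f i x) \<partial>lborel)"
      by (intro summable_comparison_test[OF _ sM]) auto
  qed
  moreover have "(\<Sum>i. f i x) = indicator {0..1} x * (\<Sum>i. u i x)" for x
    unfolding f_def
  proof (cases "x \<in> {0..1}")
    case True
    then show "(\<Sum>i. indicator {0..1} x * u i x) = indicator {0..1} x * (\<Sum>i. u i x)" by simp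
  qed simp
  ultimately show ?thesis by (simp add: set_lebesgue_integral_def f_def[abs_def])
qed

lemma coeff_extract:
  fixes c :: "nat \<Rightarrow> real" and g :: "real \<Rightarrow> real"
  assumes sc: "summable (\<lambda>k. \<bar>c k\<bar>)" and sg: "\<forall>x\<in>{0..1}. (\<lambda>k. c k * cos_basis k x) sums g x"
  shows "(LINT x:{0..1}|lborel. g x * cos_basis m x) = c m"
proof -
  have "(\<lambda>k. LINT x:{0..1}|lborel. c k * ee 0 k x * ee 0 m x) sums
        (LINT x:{0..1}|lborel. (\<Sum>k. c k * ee 0 k x * ee 0 m x))"
  proof (rule termwise_int)
    show "continuous_on {0..1} (\<lambda>x. c k * ee 0 k x * ee 0 m x)" for k
      by (intro continuous_intros ee_cont)
    show "\<bar>c k * ee 0 k x * ee 0 m x\<bar> \<le> \<bar>c k\<bar> * 9" for k x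
    proof -
      have "\<bar>ee 0 k x\<bar> \<le> 3" "\<bar>ee 0 m x\<bar> \<le> 3" using ee_bound[of 0 k x] ee_bound[of 0 m x] by auto
      then have "\<bar>ee 0 k x\<bar> * \<bar>ee 0 m x\<bar> \<le> 3 * 3" by (intro mult_mono) auto
      then show ?thesis by (simp add: abs_mult mult_left_mono mult.assoc)
    qed
    show "summable (\<lambda>k. \<bar>c k\<bar> * 9)" using sc by (rule summable_mult2)
  qed
  moreover have "(LINT x:{0..1}|lborel. c k * ee 0 k x * ee 0 m x) = (if k = m then c m else 0)" for k
    using ortho[of 0 k m] by (simp add: mult.assoc)
  ultimately have s1: "(\<lambda>k. if k = m then c m else 0) sums (LINT x:{0..1}|lborel. (\<Sum>k. c k * ee 0 k x * ee 0 m x))"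
    by simp
  have "(LINT x:{0..1}|lborel. (\<Sum>k. c k * ee 0 k x * ee 0 m x)) = (LINT x:{0..1}|lborel. g x * cos_basis m x)"
  proof (rule set_lebesgue_integral_cong, simp, intro allI impI)
    fix x :: real assume "x \<in> {0..1}"
    then have "(\<lambda>k. c k * ee 0 k x) sums g x" using sg by (simp add: ee0)
    then have "(\<lambda>k. c k * ee 0 k x * ee 0 m x) sums (g x * ee 0 m x)" by (rule sums_mult2)
    then show "(\<Sum>k. c k * ee 0 k x * ee 0 m x) = g x * cos_basis m x"
      by (simp add: sums_iff ee0)
  qed
  moreover have "(\<lambda>k. if k = m then c m else 0) sums c m"
    using sums_single[of m "\<lambda>_. c m"] by simp
  ultimately show ?thesis using s1 sums_unique2 by metis
qed



lemma fatou_sq: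
  fixes v :: "nat \<Rightarrow> 'a \<Rightarrow> real"
  assumes [measurable]: "\<And>i. v i \<in> borel_measurable M" "v0 \<in> borel_measurable M"
    and lim: "AE x in M. (\<lambda>i. v i x) \<longlonglongrightarrow> v0 x"
    and bd: "eventually (\<lambda>i. integrable M (\<lambda>x. (v i x)\<^sup>2) \<and> (\<integral>x. (v i x)\<^sup>2 \<partial>M) \<le> B) sequentially"
    and B: "B \<ge> 0"
  shows "integrable M (\<lambda>x. (v0 x)\<^sup>2) \<and> (\<integral>x. (v0 x)\<^sup>2 \<partial>M) \<le> B"
proof -
  have "(\<integral>\<^sup>+x. ennreal ((v0 x)\<^sup>2) \<partial>M) = (\<integral>\<^sup>+x. liminf (\<lambda>i. ennreal ((v i x)\<^sup>2)) \<partial>M)"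
  proof (rule nn_integral_cong_AE)
    show "AE x in M. ennreal ((v0 x)\<^sup>2) = liminf (\<lambda>i. ennreal ((v i x)\<^sup>2))"
      using lim
    proof eventually_elim
      case (elim x)
      have "(\<lambda>i. ennreal ((v i x)\<^sup>2)) \<longlonglongrightarrow> ennreal ((v0 x)\<^sup>2)"
        by (intro tendsto_ennrealI tendsto_power elim)
      from lim_imp_Liminf[of sequentially, OF _ this] show ?case by simp
    qed
  qed
  also have "\<dots> \<le> liminf (\<lambda>i. \<integral>\<^sup>+x. ennreal ((v i x)\<^sup>2) \<partial>M)"
    by (rule nn_integral_liminf) simp
  also have "\<dots> \<le> limsup (\<lambda>i. \<integral>\<^sup>+x. ennreal ((v i x)\<^sup>2) \<partial>M)"
    by (rule Liminf_le_Limsup) simp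
  also have "\<dots> \<le> ennreal B"
  proof (rule Limsup_bounded)
    show "\<forall>\<^sub>F i in sequentially. (\<integral>\<^sup>+x. ennreal ((v i x)\<^sup>2) \<partial>M) \<le> ennreal B"
      using bd
    proof eventually_elim
      case (elim i)
      then have "(\<integral>\<^sup>+x. ennreal ((v i x)\<^sup>2) \<partial>M) = ennreal (\<integral>x. (v i x)\<^sup>2 \<partial>M)"
        by (intro nn_integral_eq_integral) auto
      then show ?case using elim B by simp
    qed
  qed
  finally have fin: "(\<integral>\<^sup>+x. ennreal ((v0 x)\<^sup>2) \<partial>M) \<le> ennreal B" .
  have int: "integrable M (\<lambda>x. (v0 x)\<^sup>2)"
    by (rule integrableI_nonneg) (use fin in \<open>auto simp: top_unique less_top[symmetric] intro: le_less_trans\<close>)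
  have "ennreal (\<integral>x. (v0 x)\<^sup>2 \<partial>M) = (\<integral>\<^sup>+x. ennreal ((v0 x)\<^sup>2) \<partial>M)"
    by (intro nn_integral_eq_integral[symmetric] int) auto
  with fin have "ennreal (\<integral>x. (v0 x)\<^sup>2 \<partial>M) \<le> ennreal B" by simp
  with B have "(\<integral>x. (v0 x)\<^sup>2 \<partial>M) \<le> B" by (simp add: ennreal_le_iff)
  with int show ?thesis by simp
qed

lemma abs_le_sq: fixes u t :: real assumes "t > 0" shows "\<bar>u\<bar> \<le> (t * u\<^sup>2 + 1 / t) / 2"
proof -
  have "0 \<le> (t * \<bar>u\<bar> - 1)\<^sup>2 / t" using assms by simp
  also have "(t * \<bar>u\<bar> - 1)\<^sup>2 / t = t * u\<^sup>2 - 2 * \<bar>u\<bar> + 1 / t"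
    using assms by (simp add: power2_diff field_simps power2_eq_square)
  finally show ?thesis by simp
qed

lemma le_sqrt_from_amgm:
  fixes X Q :: real
  assumes "Q \<ge> 0" and h: "\<And>t. t > 0 \<Longrightarrow> X \<le> (t * Q + 1 / t) / 2"
  shows "X \<le> sqrt Q"
proof (cases "Q > 0")
  case True
  have "X \<le> ((1 / sqrt Q) * Q + 1 / (1 / sqrt Q)) / 2" using True by (intro h) simp
  also have "\<dots> = sqrt Q" using True
    by (simp add: field_simps)
  finally show ?thesis .
next
  case False
  then have Q: "Q = 0" using assms by simp
  show ?thesis
  proof (rule ccontr)
    assume "\<not> X \<le> sqrt Q"
    then have X: "X > 0" using Q by simp
    have "X \<le> ((1 / X) * Q + 1 / (1 / X)) / 2" using X by (intro h) simp
    then show False using X Q by simp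
  qed
qed

lemma L1_le_L2:
  fixes u :: "real \<Rightarrow> real"
  assumes [measurable]: "u \<in> borel_measurable lborel" and z: "\<And>x. x \<notin> {0..1} \<Longrightarrow> u x = 0"
    and i2: "integrable lborel (\<lambda>x. (u x)\<^sup>2)"
  shows "integrable lborel u \<and> (\<integral>x. \<bar>u x\<bar> \<partial>lborel) \<le> sqrt (\<integral>x. (u x)\<^sup>2 \<partial>lborel)"
proof -
  have ii: "integrable lborel (indicator {0..1::real} :: real \<Rightarrow> real)" by simp
  have bnd: "\<bar>u x\<bar> \<le> (t * (u x)\<^sup>2 + indicator {0..1} x / t) / 2" if "t > 0" for t x
  proof (cases "x \<in> {0..1}")
    case True then show ?thesis using abs_le_sq[OF that, of "u x"] by simp
  next
    case False then show ?thesis using z[OF False] by simp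
  qed
  have int: "integrable lborel u"
  proof (rule Bochner_Integration.integrable_bound[where f="\<lambda>x. (1 * (u x)\<^sup>2 + indicator {0..1} x / 1) / 2"])
    show "integrable lborel (\<lambda>x. (1 * (u x)\<^sup>2 + indicator {0..1::real} x / 1) / 2)"
      using i2 ii by auto
    show "AE x in lborel. norm (u x) \<le> norm ((1 * (u x)\<^sup>2 + indicator {0..1::real} x / 1) / 2)"
      using bnd[of 1] by (auto intro!: AE_I2 simp: abs_le_iff indicator_def)
  qed simp
  have "(\<integral>x. \<bar>u x\<bar> \<partial>lborel) \<le> sqrt (\<integral>x. (u x)\<^sup>2 \<partial>lborel)"
  proof (rule le_sqrt_from_amgm)
    show "0 \<le> (\<integral>x. (u x)\<^sup>2 \<partial>lborel)" by simp
    fix t :: real assume t: "t > 0"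
    have "(\<integral>x. \<bar>u x\<bar> \<partial>lborel) \<le> (\<integral>x. (t * (u x)\<^sup>2 + indicator {0..1::real} x / t) / 2 \<partial>lborel)"
      by (rule Bochner_Integration.integral_mono) (use int i2 ii bnd t in auto)
    also have "\<dots> = (t * (\<integral>x. (u x)\<^sup>2 \<partial>lborel) + 1 / t) / 2"
      using i2 ii by (simp add: divide_simps)
    finally show "(\<integral>x. \<bar>u x\<bar> \<partial>lborel) \<le> (t * (\<integral>x. (u x)\<^sup>2 \<partial>lborel) + 1 / t) / 2" .
  qed
  with int show ?thesis by simp
qed

lemma ae_unique01:
  fixes u :: "real \<Rightarrow> real"
  assumes int: "integrable lborel u" and z: "\<And>x. x \<notin> {0..1} \<Longrightarrow> u x = 0"
    and h: "\<And>x. x \<in> {0..1} \<Longrightarrow> (LINT t:{0..x}|lborel. u t) = 0"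
  shows "AE x in lborel. u x = 0"
proof -
  have um[measurable]: "u \<in> borel_measurable lborel" using int by auto
  have intI: "integrable lborel (\<lambda>x. indicator A x * u x)" if "A \<in> sets borel" for A
    using integrable_real_mult_indicator[of A lborel u] int that by (simp add: mult.commute)
  have tail: "(\<integral>x. indicator {y<..} x * u x \<partial>lborel) = 0" for y
  proof -
    consider "y < 0" | "y \<ge> 1" | "0 \<le> y" "y < 1" by linarith
    then show ?thesis
    proof cases
      case 1
      have "(\<lambda>x. indicator {y<..} x * u x) = (\<lambda>x. indicator {0..1} x * u x)"
        using 1 z by (auto simp: fun_eq_iff indicator_def)
      then show ?thesis using h[of 1] by (simp add: set_lebesgue_integral_def)
    next
      case 2
      have "(\<lambda>x. indicator {y<..} x * u x) = (\<lambda>x. 0)"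
        using 2 z by (auto simp: fun_eq_iff indicator_def)
      then show ?thesis by simp
    next
      case 3
      have "(\<lambda>x. indicator {y<..} x * u x) = (\<lambda>x. indicator {0..1} x * u x - indicator {0..y} x * u x)"
        using 3 z by (auto simp: fun_eq_iff indicator_def)
      then have "(\<integral>x. indicator {y<..} x * u x \<partial>lborel)
          = (\<integral>x. indicator {0..1} x * u x \<partial>lborel) - (\<integral>x. indicator {0..y} x * u x \<partial>lborel)"
        using intI by simp
      also have "\<dots> = 0" using h[of 1] h[of y] 3 by (simp add: set_lebesgue_integral_def)
      finally show ?thesis .
    qed
  qed
  define P where "P x = ennreal (max 0 (u x))" for x
  define N where "N x = ennreal (max 0 (- u x))" for x
  have [measurable]: "P \<in> borel_measurable lborel" "N \<in> borel_measurable lborel"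
    unfolding P_def[abs_def] N_def[abs_def] by auto
  have iP: "integrable lborel (\<lambda>x. indicator {y<..} x * max 0 (u x))" for y
    by (rule Bochner_Integration.integrable_bound[OF intI[of "{y<..}"]]) (auto simp: indicator_def)
  have iN: "integrable lborel (\<lambda>x. indicator {y<..} x * max 0 (- u x))" for y
    by (rule Bochner_Integration.integrable_bound[OF intI[of "{y<..}"]]) (auto simp: indicator_def)
  have eP: "emeasure (density lborel P) {y<..} = ennreal (\<integral>x. indicator {y<..} x * max 0 (u x) \<partial>lborel)" for y
  proof -
    have "emeasure (density lborel P) {y<..} = (\<integral>\<^sup>+x. ennreal (indicator {y<..} x * max 0 (u x)) \<partial>lborel)"
      by (subst emeasure_density) (auto intro!: nn_integral_cong simp: P_def indicator_def)
    also have "\<dots> = ennreal (\<integral>x. indicator {y<..} x * max 0 (u x) \<partial>lborel)"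
      by (rule nn_integral_eq_integral[OF iP]) auto
    finally show ?thesis .
  qed
  have eN: "emeasure (density lborel N) {y<..} = ennreal (\<integral>x. indicator {y<..} x * max 0 (- u x) \<partial>lborel)" for y
  proof -
    have "emeasure (density lborel N) {y<..} = (\<integral>\<^sup>+x. ennreal (indicator {y<..} x * max 0 (- u x)) \<partial>lborel)"
      by (subst emeasure_density) (auto intro!: nn_integral_cong simp: N_def indicator_def)
    also have "\<dots> = ennreal (\<integral>x. indicator {y<..} x * max 0 (- u x) \<partial>lborel)"
      by (rule nn_integral_eq_integral[OF iN]) auto
    finally show ?thesis .
  qed
  have "density lborel P = density lborel N"
  proof (rule measure_eqI_lessThan)
    show "sets (density lborel P) = sets borel" "sets (density lborel N) = sets borel" by auto
    show "emeasure (density lborel P) {x<..} < \<infinity>" for x using eP by simp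
    fix y :: real
    have "(\<lambda>x. indicator {y<..} x * max 0 (u x)) = (\<lambda>x. indicator {y<..} x * max 0 (- u x) + indicator {y<..} x * u x)"
      by (auto simp: fun_eq_iff indicator_def)
    then have "(\<integral>x. indicator {y<..} x * max 0 (u x) \<partial>lborel) = (\<integral>x. indicator {y<..} x * max 0 (- u x) \<partial>lborel)"
      using tail[of y] iN intI[of "{y<..}"] by simp
    then show "emeasure (density lborel P) {y<..} = emeasure (density lborel N) {y<..}"
      using eP eN by simp
  qed
  then have "AE x in lborel. P x = N x" by (intro sigma_finite_measure.density_unique[OF sigma_finite_lborel]) auto
  then show ?thesis by eventually_elim (auto simp: P_def N_def max_def split: if_splits)
qed



lemma set_int_sum:
  fixes f :: "nat \<Rightarrow> real \<Rightarrow> real"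
  assumes "finite K" "\<And>k. k \<in> K \<Longrightarrow> continuous_on {a..b} (f k)"
  shows "(LINT x:{a..b}|lborel. (\<Sum>k\<in>K. f k x)) = (\<Sum>k\<in>K. LINT x:{a..b}|lborel. f k x)"
proof -
  have i: "integrable lborel (\<lambda>x. indicator {a..b} x * f k x)" if "k \<in> K" for k
    using int_cont[OF assms(2)[OF that]] by (simp add: set_integrable_def)
  have "(LINT x:{a..b}|lborel. (\<Sum>k\<in>K. f k x)) = (\<integral>x. (\<Sum>k\<in>K. indicator {a..b} x * f k x) \<partial>lborel)"
    by (simp add: set_lebesgue_integral_def sum_distrib_left)
  also have "\<dots> = (\<Sum>k\<in>K. \<integral>x. indicator {a..b} x * f k x \<partial>lborel)"
    using Bochner_Integration.integral_sum[where I=K and M=lborel and f="\<lambda>k x. indicator {a..b} x * f k x"] i by simp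
  finally show ?thesis by (simp add: set_lebesgue_integral_def)
qed

definition wt :: "nat \<Rightarrow> nat \<Rightarrow> real" where
  "wt j k = (if k = 0 then (if j = 0 then 1 else 0) else (pi * real k) ^ (2 * j))"

lemma sq_int:
  assumes "finite K"
  shows "(LINT x:{0..1}|lborel. (\<Sum>k\<in>K. d k * ee j k x)\<^sup>2) = (\<Sum>k\<in>K. (d k)\<^sup>2 * wt j k)"
proof -
  have "(LINT x:{0..1}|lborel. (\<Sum>k\<in>K. d k * ee j k x)\<^sup>2)
      = (LINT x:{0..1}|lborel. (\<Sum>k\<in>K. \<Sum>m\<in>K. d k * d m * (ee j k x * ee j m x)))"
    by (simp add: power2_eq_square sum_product mult_ac)
  also have "\<dots> = (\<Sum>k\<in>K. LINT x:{0..1}|lborel. (\<Sum>m\<in>K. d k * d m * (ee j k x * ee j m x)))"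
    by (rule set_int_sum) (auto intro!: continuous_intros ee_cont assms)
  also have "\<dots> = (\<Sum>k\<in>K. \<Sum>m\<in>K. LINT x:{0..1}|lborel. d k * d m * (ee j k x * ee j m x))"
    by (intro sum.cong refl set_int_sum) (auto intro!: continuous_intros ee_cont assms)
  also have "\<dots> = (\<Sum>k\<in>K. \<Sum>m\<in>K. d k * d m * (if k = m then wt j k else 0))"
    by (intro sum.cong refl) (simp add: ortho wt_def)
  also have "\<dots> = (\<Sum>k\<in>K. (d k)\<^sup>2 * wt j k)"
  proof (intro sum.cong refl)
    fix k assume k: "k \<in> K"
    have "(\<Sum>m\<in>K. d k * d m * (if k = m then wt j k else 0)) = (\<Sum>m\<in>K. if m = k then d k * d k * wt j k else 0)"
      by (intro sum.cong refl) auto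
    also have "\<dots> = d k * d k * wt j k" using k assms by (simp add: sum.delta)
    finally show "(\<Sum>m\<in>K. d k * d m * (if k = m then wt j k else 0)) = (d k)\<^sup>2 * wt j k"
      by (simp add: power2_eq_square)
  qed
  finally show ?thesis .
qed

context cs
begin

definition w :: "nat \<Rightarrow> real" where "w k = (c k)\<^sup>2 * (pi * real k) ^ (2 * a)"

lemma w_nonneg: "w k \<ge> 0" by (simp add: w_def)

lemma wt_a: "(c k)\<^sup>2 * wt a k = w k"
  using a2 by (simp add: wt_def w_def)

lemma w_summable: "summable w"
proof -
  have "summable (\<lambda>k. pi ^ (2 * a) * ((c k)\<^sup>2 * real k ^ (2 * a)))"
    by (rule summable_mult[OF sumA])
  moreover have "w = (\<lambda>k. pi ^ (2 * a) * ((c k)\<^sup>2 * real k ^ (2 * a)))"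
    by (auto simp: fun_eq_iff w_def power_mult_distrib)
  ultimately show ?thesis by simp
qed

definition T :: "nat \<Rightarrow> real" where "T N = (\<Sum>k. w (k + N))"

lemma T_lim: "T \<longlonglongrightarrow> 0"
proof -
  have "T = (\<lambda>N. suminf w - (\<Sum>i<N. w i))"
    using w_summable by (simp add: fun_eq_iff T_def suminf_minus_initial_segment)
  moreover have "(\<lambda>N. suminf w - (\<Sum>i<N. w i)) \<longlonglongrightarrow> suminf w - suminf w"
    by (intro tendsto_diff tendsto_const summable_LIMSEQ w_summable)
  ultimately show ?thesis by simp
qed

lemma T_nonneg: "T N \<ge> 0"
  unfolding T_def using w_summable by (intro suminf_nonneg) (auto simp: summable_iff_shift w_nonneg)

lemma fin_tail:
  assumes "N \<le> i"
  shows "(\<Sum>k\<in>{i..<j}. w k) \<le> T N"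
proof -
  have "(\<Sum>k\<in>{i..<j}. w k) \<le> (\<Sum>k\<in>{N..<j}. w k)"
    using assms by (intro sum_mono2) (auto simp: w_nonneg)
  also have "(\<Sum>k\<in>{N..<j}. w k) = (\<Sum>k<j - N. w (k + N))"
  proof (cases "N \<le> j")
    case True
    show ?thesis using sum.atLeastLessThan_shift_0[of w N j] True
      by (simp add: atLeast0LessThan add.commute)
  qed simp
  also have "\<dots> \<le> T N"
    unfolding T_def using w_summable
    by (intro sum_le_suminf) (auto simp: summable_iff_shift w_nonneg)
  finally show ?thesis .
qed

definition g :: "nat \<Rightarrow> real \<Rightarrow> real" where "g n x = (\<Sum>k<n. c k * ee a k x)"

lemma g_cont: "continuous_on S (g n)"
  unfolding g_def by (intro continuous_intros ee_cont)

lemma g_diff: "n \<le> m \<Longrightarrow> g m x - g n x = (\<Sum>k\<in>{n..<m}. c k * ee a k x)"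
proof -
  assume nm: "n \<le> m"
  have u: "{..<m} = {..<n} \<union> {n..<m}" using nm by auto
  have "g m x = g n x + (\<Sum>k\<in>{n..<m}. c k * ee a k x)"
    unfolding g_def u by (subst sum.union_disjoint) auto
  then show ?thesis by simp
qed

lemma int_g_sq: "(LINT x:{0..1}|lborel. (g n x)\<^sup>2) \<le> suminf w"
proof -
  have "(LINT x:{0..1}|lborel. (g n x)\<^sup>2) = (\<Sum>k<n. w k)"
    unfolding g_def by (subst sq_int) (simp_all only: wt_a finite_lessThan)
  also have "\<dots> \<le> suminf w" using w_summable by (intro sum_le_suminf) (auto simp: w_nonneg)
  finally show ?thesis .
qed

lemma int_gdiff_sq0:
  assumes "n \<le> m"
  shows "(LINT x:{0..1}|lborel. (g m x - g n x)\<^sup>2) = (\<Sum>k\<in>{n..<m}. w k)"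
proof -
  have "(LINT x:{0..1}|lborel. (g m x - g n x)\<^sup>2) = (LINT x:{0..1}|lborel. (\<Sum>k\<in>{n..<m}. c k * ee a k x)\<^sup>2)"
    using g_diff[OF assms] by simp
  also have "\<dots> = (\<Sum>k\<in>{n..<m}. (c k)\<^sup>2 * wt a k)" by (rule sq_int) simp
  also have "\<dots> = (\<Sum>k\<in>{n..<m}. w k)" by (simp only: wt_a)
  finally show ?thesis .
qed

lemma int_gdiff_sq:
  assumes "N \<le> n" "N \<le> m"
  shows "(LINT x:{0..1}|lborel. (g m x - g n x)\<^sup>2) \<le> T N"
proof (cases "n \<le> m")
  case True
  then show ?thesis using fin_tail[OF assms(1)] int_gdiff_sq0[OF True] by simp
next
  case False
  have e: "(\<lambda>x. (g m x - g n x)\<^sup>2) = (\<lambda>x. (g n x - g m x)\<^sup>2)"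
    by (simp add: fun_eq_iff power2_commute)
  show ?thesis using fin_tail[OF assms(2)] int_gdiff_sq0[of m n] False by (simp add: e)
qed

end


context cs
begin

definition s :: "nat \<Rightarrow> real \<Rightarrow> real" where "s n x = indicator {0..1} x * g n x"

lemma g_meas[measurable]: "g n \<in> borel_measurable lborel"
  using borel_measurable_continuous_onI[OF g_cont[of UNIV n]] by simp

lemma s_meas[measurable]: "s n \<in> borel_measurable lborel"
  unfolding s_def[abs_def] by measurable

lemma s_int: "integrable lborel (s n)"
  using int_cont[OF g_cont[of "{0..1}" n]] by (simp add: set_integrable_def s_def[abs_def])

lemma s_zero: "x \<notin> {0..1} \<Longrightarrow> s n x = 0" by (simp add: s_def)

lemma s_sq:
  "integrable lborel (\<lambda>x. (s m x - s n x)\<^sup>2) \<and>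
   (\<integral>x. (s m x - s n x)\<^sup>2 \<partial>lborel) = (LINT x:{0..1}|lborel. (g m x - g n x)\<^sup>2)"
proof -
  have e: "(\<lambda>x. (s m x - s n x)\<^sup>2) = (\<lambda>x. indicator {0..1} x * (g m x - g n x)\<^sup>2)"
    by (auto simp: fun_eq_iff s_def indicator_def)
  have "set_integrable lborel {0..1} (\<lambda>x. (g m x - g n x)\<^sup>2)"
    by (intro int_cont continuous_intros g_cont)
  then show ?thesis unfolding e by (simp add: set_integrable_def set_lebesgue_integral_def)
qed

lemma s_sq1:
  "integrable lborel (\<lambda>x. (s n x)\<^sup>2) \<and>
   (\<integral>x. (s n x)\<^sup>2 \<partial>lborel) = (LINT x:{0..1}|lborel. (g n x)\<^sup>2)"
proof -
  have e: "(\<lambda>x. (s n x)\<^sup>2) = (\<lambda>x. indicator {0..1} x * (g n x)\<^sup>2)"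
    by (auto simp: fun_eq_iff s_def indicator_def)
  have "set_integrable lborel {0..1} (\<lambda>x. (g n x)\<^sup>2)"
    by (intro int_cont continuous_intros g_cont)
  then show ?thesis unfolding e by (simp add: set_integrable_def set_lebesgue_integral_def)
qed

lemma L1_cauchy:
  assumes "e > 0"
  shows "\<exists>N. \<forall>i\<ge>N. \<forall>j\<ge>N. (LINT x|lborel. norm (s i x - s j x)) < e"
proof -
  have "eventually (\<lambda>N. T N < e\<^sup>2) sequentially"
    using T_lim assms by (intro order_tendstoD(2)) auto
  then obtain N where N: "T N < e\<^sup>2" by (auto simp: eventually_sequentially)
  have "(LINT x|lborel. norm (s i x - s j x)) < e" if "i \<ge> N" "j \<ge> N" for i j
  proof -
    have "(LINT x|lborel. \<bar>s i x - s j x\<bar>) \<le> sqrt (\<integral>x. (s i x - s j x)\<^sup>2 \<partial>lborel)"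
      using L1_le_L2[of "\<lambda>x. s i x - s j x"] s_sq[of i j] by (auto simp: s_zero)
    also have "\<dots> \<le> sqrt (T N)"
      using s_sq[of i j] int_gdiff_sq[of N j i] that by simp
    also have "\<dots> < sqrt (e\<^sup>2)" by (rule real_sqrt_less_mono[OF N])
    also have "\<dots> = e" using assms by simp
    finally show ?thesis by simp
  qed
  then show ?thesis by blast
qed

definition GG :: "nat \<Rightarrow> real \<Rightarrow> real" where "GG n y = (\<Sum>k<n. c k * ee (a - 1) k y)"

lemma int_g: "x \<ge> 0 \<Longrightarrow> (LINT t:{0..x}|lborel. g n t) = GG n x - GG n 0"
proof -
  assume x: "x \<ge> 0"
  have "(GG n has_real_derivative g n t) (at t)" for t
  proof -
    have "((\<lambda>y. \<Sum>k<n. c k * ee (a - 1) k y) has_real_derivative (\<Sum>k<n. c k * ee (Suc (a - 1)) k t)) (at t)"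
      by (intro DERIV_sum DERIV_cmult ee_deriv)
    moreover have "Suc (a - 1) = a" using a2 by simp
    ultimately show ?thesis by (simp add: GG_def[abs_def] g_def)
  qed
  then show ?thesis by (intro FTC_Icc x g_cont)
qed

lemma GG_lim: "(\<lambda>n. GG n x) \<longlonglongrightarrow> F (a - 1) x"
  using F_sums[of "a - 1" x] by (simp add: sums_def GG_def)

lemma h_exists:
  "\<exists>h. h \<in> borel_measurable lborel \<and> (\<forall>x. x \<notin> {0..1} \<longrightarrow> h x = 0)
     \<and> integrable lborel (\<lambda>x. (h x)\<^sup>2) \<and> (\<integral>x. (h x)\<^sup>2 \<partial>lborel) \<le> suminf w
     \<and> (\<forall>x\<in>{0..1}. (LINT t:{0..x}|lborel. h t) = F (a - 1) x - F (a - 1) 0)"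
proof -
  obtain r where r: "strict_mono r" "AE x in lborel. Cauchy (\<lambda>i. s (r i) x)"
    using cauchy_L1_AE_cauchy_subseq[OF s_int L1_cauchy] by blast
  define h where "h x = lim (\<lambda>i. s (r i) x)" for x
  have hm[measurable]: "h \<in> borel_measurable lborel"
    unfolding h_def[abs_def] by (rule borel_measurable_lim_metric) simp
  have hz: "h x = 0" if "x \<notin> {0..1}" for x
    using that by (simp add: h_def s_zero)
  have hlim: "AE x in lborel. (\<lambda>i. s (r i) x) \<longlonglongrightarrow> h x"
    using r(2) by eventually_elim (simp add: h_def Cauchy_convergent_iff convergent_LIMSEQ_iff)
  have wnn: "suminf w \<ge> 0" using w_summable by (intro suminf_nonneg w_nonneg)
  have fa: "integrable lborel (\<lambda>x. (h x)\<^sup>2) \<and> (\<integral>x. (h x)\<^sup>2 \<partial>lborel) \<le> suminf w"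
  proof (rule fatou_sq[OF _ hm hlim _ wnn])
    show "\<forall>\<^sub>F i in sequentially. integrable lborel (\<lambda>x. (s (r i) x)\<^sup>2) \<and> (\<integral>x. (s (r i) x)\<^sup>2 \<partial>lborel) \<le> suminf w"
      using s_sq1 int_g_sq by (intro always_eventually) auto
  qed simp
  have fb: "(\<integral>x. (s (r i) x - h x)\<^sup>2 \<partial>lborel) \<le> T (r i) \<and> integrable lborel (\<lambda>x. (s (r i) x - h x)\<^sup>2)" for i
  proof -
    have "integrable lborel (\<lambda>x. (s (r i) x - h x)\<^sup>2) \<and> (\<integral>x. (s (r i) x - h x)\<^sup>2 \<partial>lborel) \<le> T (r i)"
    proof (rule fatou_sq[where v="\<lambda>j x. s (r i) x - s (r j) x"])
      show "AE x in lborel. (\<lambda>j. s (r i) x - s (r j) x) \<longlonglongrightarrow> s (r i) x - h x"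
        using hlim by eventually_elim (intro tendsto_diff tendsto_const)
      show "\<forall>\<^sub>F j in sequentially. integrable lborel (\<lambda>x. (s (r i) x - s (r j) x)\<^sup>2) \<and>
              (\<integral>x. (s (r i) x - s (r j) x)\<^sup>2 \<partial>lborel) \<le> T (r i)"
        using eventually_ge_at_top[of i]
      proof eventually_elim
        case (elim j)
        then have "r i \<le> r j" using r(1) by (simp add: strict_mono_less_eq)
        then show ?case using s_sq[of "r i" "r j"] int_gdiff_sq[of "r i" "r j" "r i"] by simp
      qed
    qed (auto simp: T_nonneg)
    then show ?thesis by simp
  qed
  have hL1: "integrable lborel h" using L1_le_L2[of h] hz fa by auto
  have dL1: "(\<integral>x. \<bar>s (r i) x - h x\<bar> \<partial>lborel) \<le> sqrt (T (r i))" for i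
  proof -
    have "(\<integral>x. \<bar>s (r i) x - h x\<bar> \<partial>lborel) \<le> sqrt (\<integral>x. (s (r i) x - h x)\<^sup>2 \<partial>lborel)"
      using L1_le_L2[of "\<lambda>x. s (r i) x - h x"] fb[of i] hz by (auto simp: s_zero)
    also have "\<dots> \<le> sqrt (T (r i))" using fb[of i] by simp
    finally show ?thesis .
  qed
  have hint: "(LINT t:{0..x}|lborel. h t) = F (a - 1) x - F (a - 1) 0" if x: "x \<in> {0..1}" for x
  proof -
    have eqg: "(LINT t:{0..x}|lborel. g n t) = (\<integral>t. indicator {0..x} t * s n t \<partial>lborel)" for n
      using x by (auto simp: set_lebesgue_integral_def s_def indicator_def intro!: Bochner_Integration.integral_cong)
    have ii: "integrable lborel (\<lambda>t. indicator {0..x} t * f t)" if "integrable lborel f" for f :: "real \<Rightarrow> real"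
      using integrable_real_mult_indicator[OF _ that, of "{0..x}"] by (simp add: mult.commute)
    have bound: "norm ((LINT t:{0..x}|lborel. h t) - (LINT t:{0..x}|lborel. g (r i) t)) \<le> sqrt (T (r i))" for i
    proof -
      have "(LINT t:{0..x}|lborel. h t) - (LINT t:{0..x}|lborel. g (r i) t)
          = (\<integral>t. indicator {0..x} t * (h t - s (r i) t) \<partial>lborel)"
        unfolding eqg using ii[OF hL1] ii[OF s_int]
        by (simp add: set_lebesgue_integral_def right_diff_distrib)
      also have "\<bar>\<dots>\<bar> \<le> (\<integral>t. \<bar>s (r i) t - h t\<bar> \<partial>lborel)"
        by (rule integral_abs_bound_integral)
           (use ii hL1 s_int in \<open>auto simp: indicator_def intro!: Bochner_Integration.integrable_diff\<close>)
      finally show ?thesis using dL1[of i] by simp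
    qed
    have sq0: "(\<lambda>i. sqrt (T (r i))) \<longlonglongrightarrow> 0"
    proof -
      have "(\<lambda>i. T (r i)) \<longlonglongrightarrow> 0" using LIMSEQ_subseq_LIMSEQ[OF T_lim r(1)] by (simp add: comp_def)
      from tendsto_real_sqrt[OF this] show ?thesis by simp
    qed
    have "(\<lambda>i. (LINT t:{0..x}|lborel. h t) - (LINT t:{0..x}|lborel. g (r i) t)) \<longlonglongrightarrow> 0"
      by (rule Lim_null_comparison[OF always_eventually sq0]) (use bound in auto)
    then have "(\<lambda>i. (LINT t:{0..x}|lborel. h t) - ((LINT t:{0..x}|lborel. h t) - (LINT t:{0..x}|lborel. g (r i) t)))
         \<longlonglongrightarrow> (LINT t:{0..x}|lborel. h t) - 0"
      by (intro tendsto_diff tendsto_const)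
    then have l1: "(\<lambda>i. LINT t:{0..x}|lborel. g (r i) t) \<longlonglongrightarrow> (LINT t:{0..x}|lborel. h t)" by simp
    have "(\<lambda>n. GG n x - GG n 0) \<longlonglongrightarrow> F (a - 1) x - F (a - 1) 0"
      by (intro tendsto_diff GG_lim)
    from LIMSEQ_subseq_LIMSEQ[OF this r(1)]
    have l2: "(\<lambda>i. LINT t:{0..x}|lborel. g (r i) t) \<longlonglongrightarrow> F (a - 1) x - F (a - 1) 0"
      using x by (simp add: comp_def int_g)
    show ?thesis using LIMSEQ_unique[OF l1 l2] .
  qed
  show ?thesis using hm hz fa hint by blast
qed

end


lemma ee_bound_s2: "k \<ge> 1 \<Longrightarrow> \<bar>ee j k x\<bar> \<le> sqrt 2 * (pi * real k) ^ j"
proof -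
  assume "k \<ge> 1"
  have "\<bar>ee j k x\<bar> = sqrt 2 * (pi * real k) ^ j * \<bar>cos (pi * real k * x + real j * pi / 2)\<bar>"
    using \<open>k\<ge>1\<close> by (simp add: ee_def abs_mult)
  also have "\<dots> \<le> sqrt 2 * (pi * real k) ^ j * 1"
    by (intro mult_left_mono) auto
  finally show ?thesis by simp
qed

lemma vdiff_sq: "(ee j k 1 - ee j k 0)\<^sup>2 \<le> 8 * (pi * real k) ^ (2 * j)"
proof (cases "k = 0")
  case True then show ?thesis by (simp add: ee_def)
next
  case False
  then have k: "k \<ge> 1" by simp
  have "\<bar>ee j k 1 - ee j k 0\<bar> \<le> \<bar>ee j k 1\<bar> + \<bar>ee j k 0\<bar>" by linarith
  also have "\<dots> \<le> 2 * (sqrt 2 * (pi * real k) ^ j)" using ee_bound_s2[OF k, of j 1] ee_bound_s2[OF k, of j 0] by simp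
  finally have b: "\<bar>ee j k 1 - ee j k 0\<bar> \<le> 2 * (sqrt 2 * (pi * real k) ^ j)" .
  have "(ee j k 1 - ee j k 0)\<^sup>2 = \<bar>ee j k 1 - ee j k 0\<bar>\<^sup>2" by simp
  also have "\<dots> \<le> (2 * (sqrt 2 * (pi * real k) ^ j))\<^sup>2" by (rule power_mono[OF b]) simp
  also have "\<dots> = 8 * (pi * real k) ^ (2 * j)" by (simp add: power_mult_distrib power_mult[symmetric] mult.commute)
  finally show ?thesis .
qed

lemma cs_inf:
  fixes p q :: "nat \<Rightarrow> real"
  assumes sp: "summable (\<lambda>k. (p k)\<^sup>2)" and sq: "summable (\<lambda>k. (q k)\<^sup>2)"
  shows "summable (\<lambda>k. p k * q k) \<and> (\<Sum>k. p k * q k)\<^sup>2 \<le> (\<Sum>k. (p k)\<^sup>2) * (\<Sum>k. (q k)\<^sup>2)"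
proof -
  have spq: "summable (\<lambda>k. p k * q k)"
  proof (rule summable_comparison_test[OF _ summable_add[OF sp sq]])
    show "\<exists>N. \<forall>n\<ge>N. norm (p n * q n) \<le> (p n)\<^sup>2 + (q n)\<^sup>2"
    proof (intro exI allI impI)
      fix n
      have "0 \<le> (\<bar>p n\<bar> - \<bar>q n\<bar>)\<^sup>2" by simp
      then have "2 * (\<bar>p n\<bar> * \<bar>q n\<bar>) \<le> (p n)\<^sup>2 + (q n)\<^sup>2" by (simp add: power2_diff)
      moreover have "\<bar>p n\<bar> * \<bar>q n\<bar> \<ge> 0" by simp
      ultimately have "\<bar>p n\<bar> * \<bar>q n\<bar> \<le> (p n)\<^sup>2 + (q n)\<^sup>2" by linarith
      then show "norm (p n * q n) \<le> (p n)\<^sup>2 + (q n)\<^sup>2" by (simp add: abs_mult)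
    qed
  qed
  have lim: "(\<lambda>n. (\<Sum>k<n. p k * q k)\<^sup>2) \<longlonglongrightarrow> (\<Sum>k. p k * q k)\<^sup>2"
    by (intro tendsto_power summable_LIMSEQ spq)
  have "(\<Sum>k. p k * q k)\<^sup>2 \<le> (\<Sum>k. (p k)\<^sup>2) * (\<Sum>k. (q k)\<^sup>2)"
  proof (rule LIMSEQ_le_const2[OF lim])
    show "\<exists>N. \<forall>n\<ge>N. (\<Sum>k<n. p k * q k)\<^sup>2 \<le> (\<Sum>k. (p k)\<^sup>2) * (\<Sum>k. (q k)\<^sup>2)"
    proof (intro exI allI impI)
      fix n :: nat
      have "(\<Sum>k<n. p k * q k)\<^sup>2 \<le> (\<Sum>k<n. (p k)\<^sup>2) * (\<Sum>k<n. (q k)\<^sup>2)"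
        by (rule Cauchy_Schwarz_ineq_sum)
      also have "\<dots> \<le> (\<Sum>k. (p k)\<^sup>2) * (\<Sum>k. (q k)\<^sup>2)"
        by (intro mult_mono sum_le_suminf sp sq sum_nonneg suminf_nonneg) auto
      finally show "(\<Sum>k<n. p k * q k)\<^sup>2 \<le> (\<Sum>k. (p k)\<^sup>2) * (\<Sum>k. (q k)\<^sup>2)" .
    qed
  qed
  with spq show ?thesis by simp
qed

definition bb :: "nat \<Rightarrow> real" where
  "bb k = (1/4) * (if k = 0 then 0 else 1 / (real k)\<^sup>2) + (if k = 1 then 3/4 else 0)"

lemma bb_sums: "bb sums (pi\<^sup>2 / 24 + 3 / 4)"
proof -
  have "(\<lambda>n. 1 / (1 + real n)\<^sup>2) sums (pi\<^sup>2 / 6)" using inverse_squares_sums by simp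
  then have "(\<lambda>n. (\<lambda>k. if k = 0 then 0 else 1 / (real k)\<^sup>2) (Suc n)) sums (pi\<^sup>2 / 6)"
    by (simp add: add.commute)
  then have s1: "(\<lambda>k. if k = 0 then 0 else 1 / (real k)\<^sup>2) sums (pi\<^sup>2 / 6)"
    by (subst (asm) sums_Suc_iff) simp
  have s2: "(\<lambda>k. if k = 1 then 3/4 else (0::real)) sums (3/4)"
    using sums_single[of 1 "\<lambda>_. 3/4::real"] by simp
  have "bb sums ((1/4) * (pi\<^sup>2 / 6) + 3/4)"
    unfolding bb_def[abs_def] by (intro sums_add sums_mult s1 s2)
  then show ?thesis by simp
qed

lemma inv4_le_bb: "k \<ge> 1 \<Longrightarrow> 1 / real k ^ 4 \<le> bb k"
proof -
  assume k: "k \<ge> 1"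
  show ?thesis
  proof (cases "k = 1")
    case True then show ?thesis by (simp add: bb_def)
  next
    case False
    then have k2: "real k \<ge> 2" using k by simp
    have "4 * (real k)\<^sup>2 \<le> real k ^ 4"
    proof -
      have "2 * 2 \<le> real k * real k" by (rule mult_mono) (use k2 in auto)
      then have "4 \<le> (real k)\<^sup>2" by (simp add: power2_eq_square)
      then have "4 * (real k)\<^sup>2 \<le> (real k)\<^sup>2 * (real k)\<^sup>2" by (intro mult_right_mono) auto
      also have "\<dots> = real k ^ 4" by (simp add: power2_eq_square power4_eq_xxxx)
      finally show ?thesis .
    qed
    then have "1 / real k ^ 4 \<le> 1 / (4 * (real k)\<^sup>2)"
      using k by (intro divide_left_mono) auto
    then show ?thesis using False k by (simp add: bb_def)
  qed
qed



locale cs_f = cs +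
  fixes f :: "real \<Rightarrow> real"
  assumes fsum: "\<forall>x\<in>{0..1}. (\<lambda>k. c k * cos_basis k x) sums f x"
begin

lemma F0_f: "x \<in> {0..1} \<Longrightarrow> F 0 x = f x"
proof -
  assume x: "x \<in> {0..1}"
  have "(\<lambda>k. c k * ee 0 k x) sums F 0 x" by (rule F_sums) simp
  moreover have "(\<lambda>k. c k * ee 0 k x) sums f x" using fsum x by (simp add: ee0)
  ultimately show ?thesis by (rule sums_unique2)
qed

lemma sob_ex: "\<exists>D. sob_derivs a f D"
proof -
  obtain h where h: "h \<in> borel_measurable lborel" "\<forall>x. x \<notin> {0..1} \<longrightarrow> h x = 0"
     "integrable lborel (\<lambda>x. (h x)\<^sup>2)" "(\<integral>x. (h x)\<^sup>2 \<partial>lborel) \<le> suminf w"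
     "\<forall>x\<in>{0..1}. (LINT t:{0..x}|lborel. h t) = F (a - 1) x - F (a - 1) 0"
    using h_exists by blast
  define D where "D \<tau> = (if \<tau> < a then F \<tau> else h)" for \<tau>
  have "sob_derivs a f D"
    unfolding sob_derivs_def
  proof (intro conjI ballI allI impI)
    show "D 0 x = f x" if "x \<in> {0..1}" for x using a2 that F0_f by (simp add: D_def)
    show "(D \<tau> has_real_derivative D (Suc \<tau>) x) (at x within {0..1})" if "\<tau> < a - 1" for \<tau> x
      using that F_deriv[OF that] by (simp add: D_def)
    show "D a \<in> borel_measurable lborel" using h(1) by (simp add: D_def)
    have e: "(\<lambda>x. indicator {0..1} x *\<^sub>R (D a x)\<^sup>2) = (\<lambda>x. (h x)\<^sup>2)"
      using h(2) by (auto simp: fun_eq_iff D_def indicator_def)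
    show "set_integrable lborel {0..1} (\<lambda>x. (D a x)\<^sup>2)"
      unfolding set_integrable_def e by (rule h(3))
    show "D (a - 1) x = D (a - 1) 0 + (LINT t:{0..x}|lborel. D a t)" if "x \<in> {0..1}" for x
      using h(5) that a2 by (simp add: D_def)
  qed
  then show ?thesis by blast
qed

lemma D_eq:
  assumes D: "sob_derivs a f D"
  shows "\<tau> \<le> a - 1 \<Longrightarrow> x \<in> {0..1} \<Longrightarrow> D \<tau> x = F \<tau> x"
proof (induction \<tau> arbitrary: x)
  case 0
  then show ?case using D F0_f by (simp add: sob_derivs_def)
next
  case (Suc \<tau>)
  then have t: "\<tau> < a - 1" by simp
  have d1: "(D \<tau> has_real_derivative D (Suc \<tau>) x) (at x within {0..1})"
    using D t Suc.prems by (simp add: sob_derivs_def)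
  have d2: "(F \<tau> has_real_derivative D (Suc \<tau>) x) (at x within {0..1})"
    by (rule has_field_derivative_transform_within[OF d1, of 1]) (use Suc t in auto)
  have d3: "(F \<tau> has_real_derivative F (Suc \<tau>) x) (at x within {0..1})"
    by (rule F_deriv[OF t])
  show ?case
    using vector_derivative_unique_within_closed_interval[of 0 1 x "F \<tau>" "D (Suc \<tau>) x" "F (Suc \<tau>) x"]
      d2 d3 Suc.prems by (simp add: has_real_derivative_iff_has_vector_derivative)
qed

lemma int_f: "(LINT x:{0..1}|lborel. f x) = c 0"
proof -
  have "(LINT x:{0..1}|lborel. f x * cos_basis 0 x) = c 0"
    by (rule coeff_extract[OF _ fsum]) (use summable_abs_pow[of 0] in simp)
  then show ?thesis by (simp add: cos_basis_def)
qed

definition Acoef :: real where "Acoef = (\<Sum>k. (c k)\<^sup>2 * real k ^ (2 * a))"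

lemma Acoef_nonneg: "Acoef \<ge> 0" unfolding Acoef_def by (intro suminf_nonneg sumA) simp

lemma suminf_w: "suminf w = pi ^ (2 * a) * Acoef"
proof -
  have "w = (\<lambda>k. pi ^ (2 * a) * ((c k)\<^sup>2 * real k ^ (2 * a)))"
    by (auto simp: fun_eq_iff w_def power_mult_distrib)
  then show ?thesis unfolding Acoef_def using suminf_mult[OF sumA] by simp
qed

lemma Da_bound:
  assumes D: "sob_derivs a f D"
  shows "(LINT x:{0..1}|lborel. (D a x)\<^sup>2) \<le> suminf w"
proof -
  obtain h where h: "h \<in> borel_measurable lborel" "\<forall>x. x \<notin> {0..1} \<longrightarrow> h x = 0"
     "integrable lborel (\<lambda>x. (h x)\<^sup>2)" "(\<integral>x. (h x)\<^sup>2 \<partial>lborel) \<le> suminf w"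
     "\<forall>x\<in>{0..1}. (LINT t:{0..x}|lborel. h t) = F (a - 1) x - F (a - 1) 0"
    using h_exists by blast
  have Dm[measurable]: "D a \<in> borel_measurable lborel" using D unfolding sob_derivs_def by blast
  have si: "set_integrable lborel {0..1} (\<lambda>x. (D a x)\<^sup>2)" using D unfolding sob_derivs_def by blast
  have rel: "\<forall>x\<in>{0..1}. D (a - 1) x = D (a - 1) 0 + (LINT t:{0..x}|lborel. D a t)"
    using D unfolding sob_derivs_def by blast
  have hm[measurable]: "h \<in> borel_measurable lborel" by (rule h(1))
  define v where "v x = indicator {0..1} x * D a x" for x
  have vm[measurable]: "v \<in> borel_measurable lborel" unfolding v_def[abs_def] by measurable
  have v2: "(\<lambda>x. (v x)\<^sup>2) = (\<lambda>x. indicator {0..1} x *\<^sub>R (D a x)\<^sup>2)"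
    by (auto simp: fun_eq_iff v_def indicator_def)
  have vz: "v x = 0" if "x \<notin> {0..1}" for x using that by (simp add: v_def)
  have v2i: "integrable lborel (\<lambda>x. (v x)\<^sup>2)" using si unfolding set_integrable_def v2 .
  have vi: "integrable lborel v" using L1_le_L2[OF vm vz v2i] by blast
  have hi: "integrable lborel h" using L1_le_L2[OF hm _ h(3)] h(2) by blast
  define u where "u x = v x - h x" for x
  have ui: "integrable lborel u" unfolding u_def[abs_def] using vi hi by simp
  have uz: "u x = 0" if "x \<notin> {0..1}" for x using that h(2) by (simp add: u_def v_def)
  have ii: "integrable lborel (\<lambda>t. indicator {0..x} t * q t)" if "integrable lborel q" for q :: "real \<Rightarrow> real" and x
    using integrable_real_mult_indicator[OF _ that, of "{0..x}"] by (simp add: mult.commute)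
  have uint: "(LINT t:{0..x}|lborel. u t) = 0" if x: "x \<in> {0..1}" for x
  proof -
    have ev: "(\<lambda>t. indicator {0..x} t * v t) = (\<lambda>t. indicator {0..x} t * D a t)"
      using x by (auto simp: fun_eq_iff v_def indicator_def)
    have "(LINT t:{0..x}|lborel. u t) = (LINT t:{0..x}|lborel. D a t) - (LINT t:{0..x}|lborel. h t)"
      unfolding set_lebesgue_integral_def u_def using ii[OF vi, of x] ii[OF hi, of x]
      by (simp add: right_diff_distrib ev[symmetric])
    also have "\<dots> = (D (a - 1) x - D (a - 1) 0) - (F (a - 1) x - F (a - 1) 0)"
    proof -
      have r1: "D (a - 1) x = D (a - 1) 0 + (LINT t:{0..x}|lborel. D a t)" using rel x by blast
      have r2: "(LINT t:{0..x}|lborel. h t) = F (a - 1) x - F (a - 1) 0" using h(5) x by blast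
      show ?thesis using r1 r2 by simp
    qed
    also have "\<dots> = 0" using D_eq[OF D, of "a - 1" x] D_eq[OF D, of "a - 1" 0] x by simp
    finally show ?thesis .
  qed
  have "AE x in lborel. u x = 0" by (rule ae_unique01[OF ui uz uint])
  then have ae: "AE x in lborel. indicator {0..1} x *\<^sub>R (D a x)\<^sup>2 = (h x)\<^sup>2"
  proof eventually_elim
    case (elim x)
    then show ?case using h(2) by (cases "x \<in> {0..1}") (auto simp: u_def v_def)
  qed
  have "(LINT x:{0..1}|lborel. (D a x)\<^sup>2) = (\<integral>x. (h x)\<^sup>2 \<partial>lborel)"
    unfolding set_lebesgue_integral_def by (rule integral_cong_AE[OF _ _ ae]) measurable
  then show ?thesis using h(4) by simp
qed

lemma int_Dtau:
  assumes D: "sob_derivs a f D" and t1: "1 \<le> \<tau>" and ta: "\<tau> \<le> a - 1"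
  shows "(LINT x:{0..1}|lborel. D \<tau> x)\<^sup>2 \<le> 8 * pi ^ (2 * (\<tau> - 1)) * (pi\<^sup>2 / 24 + 3 / 4) * Acoef"
proof -
  define j where "j = \<tau> - 1"
  have tj: "\<tau> = Suc j" using t1 by (simp add: j_def)
  have ja: "j < a - 1" "j \<le> a - 1" "j \<le> a - 2" using t1 ta by (auto simp: j_def)
  have "(LINT x:{0..1}|lborel. D \<tau> x) = (LINT x:{0..1}|lborel. F \<tau> x)"
    by (rule set_lebesgue_integral_cong) (use D_eq[OF D ta] in auto)
  also have "\<dots> = F j 1 - F j 0"
    unfolding tj by (rule FTC_Icc) (use F_deriv[OF ja(1)] F_cont[of "Suc j"] ja in auto)
  also have "\<dots> = (\<Sum>k. c k * (ee j k 1 - ee j k 0))"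
  proof -
    have "(\<lambda>k. c k * ee j k 1 - c k * ee j k 0) sums (F j 1 - F j 0)"
      by (intro sums_diff F_sums ja(2))
    then show ?thesis by (simp add: sums_iff right_diff_distrib)
  qed
  finally have eqI: "(LINT x:{0..1}|lborel. D \<tau> x) = (\<Sum>k. c k * (ee j k 1 - ee j k 0))" .
  define p where "p k = c k * real k ^ a" for k
  define q where "q k = (ee j k 1 - ee j k 0) / real k ^ a" for k
  have pq: "p k * q k = c k * (ee j k 1 - ee j k 0)" for k
    by (cases "k = 0") (auto simp: p_def q_def ee_def)
  have sp: "summable (\<lambda>k. (p k)\<^sup>2)"
    using sumA by (simp add: p_def power_mult_distrib power_mult[symmetric] mult.commute)
  define K where "K = 8 * pi ^ (2 * j)"
  have qb: "(q k)\<^sup>2 \<le> K * bb k" for k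
  proof (cases "k = 0")
    case True then show ?thesis by (simp add: q_def bb_def ee_def K_def)
  next
    case False
    then have k: "k \<ge> 1" "real k \<ge> 1" by auto
    have "(q k)\<^sup>2 = (ee j k 1 - ee j k 0)\<^sup>2 / real k ^ (2 * a)"
      by (simp add: q_def power_divide power_mult[symmetric] mult.commute)
    also have "\<dots> \<le> 8 * (pi * real k) ^ (2 * j) / real k ^ (2 * a)"
      by (rule divide_right_mono[OF vdiff_sq]) simp
    also have "\<dots> = K * (real k ^ (2 * j) / real k ^ (2 * a))"
      by (simp add: K_def power_mult_distrib)
    also have "real k ^ (2 * j) / real k ^ (2 * a) \<le> 1 / real k ^ 4"
    proof -
      have "real k ^ (2 * j) * real k ^ 4 = real k ^ (2 * j + 4)" by (simp add: power_add)
      also have "\<dots> \<le> real k ^ (2 * a)" using ja(3) a2 k by (intro power_increasing) auto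
      finally have "real k ^ (2 * j) * real k ^ 4 \<le> real k ^ (2 * a)" .
      then show ?thesis using k by (simp add: field_simps)
    qed
    then have "K * (real k ^ (2 * j) / real k ^ (2 * a)) \<le> K * (1 / real k ^ 4)"
      by (intro mult_left_mono) (auto simp: K_def)
    also have "\<dots> \<le> K * bb k" using inv4_le_bb[OF k(1)] by (intro mult_left_mono) (auto simp: K_def)
    finally show ?thesis by simp
  qed
  have sK: "(\<lambda>k. K * bb k) sums (K * (pi\<^sup>2 / 24 + 3 / 4))" by (intro sums_mult bb_sums)
  have sq: "summable (\<lambda>k. (q k)\<^sup>2)"
    by (rule summable_comparison_test[OF _ sums_summable[OF sK]]) (use qb in auto)
  have sqb: "(\<Sum>k. (q k)\<^sup>2) \<le> K * (pi\<^sup>2 / 24 + 3 / 4)"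
    using suminf_le[OF qb sq sums_summable[OF sK]] sK by (simp add: sums_iff)
  have "(\<Sum>k. p k * q k)\<^sup>2 \<le> (\<Sum>k. (p k)\<^sup>2) * (\<Sum>k. (q k)\<^sup>2)" using cs_inf[OF sp sq] by simp
  also have "(\<Sum>k. (p k)\<^sup>2) = Acoef"
    unfolding Acoef_def p_def by (simp add: power_mult_distrib power_mult[symmetric] mult.commute)
  also have "Acoef * (\<Sum>k. (q k)\<^sup>2) \<le> Acoef * (K * (pi\<^sup>2 / 24 + 3 / 4))"
    by (intro mult_left_mono sqb Acoef_nonneg)
  finally show ?thesis using eqI pq by (simp add: K_def j_def mult_ac)
qed

end


lemma rw_pos: "k \<ge> 1 \<Longrightarrow> r_weight b \<gamma> k = \<gamma> / real k powr (2 * b)"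
  by (simp add: r_weight_def powr_minus divide_inverse)

lemma rw_nat: "k \<ge> 1 \<Longrightarrow> r_weight (real n) \<gamma> k = \<gamma> / real k ^ (2 * n)"
proof -
  assume k: "k \<ge> 1"
  have "real k powr (2 * real n) = real k ^ (2 * n)"
    using k powr_realpow[of "real k" "2 * n"] by simp
  then show ?thesis using rw_pos[OF k] by simp
qed

lemma bridge_summable:
  fixes c :: "nat \<Rightarrow> real"
  assumes s: "summable (\<lambda>k. (c k)\<^sup>2 / r_weight (real n) \<gamma> k)" and g: "\<gamma> > 0" and n: "n \<ge> 1"
  shows "summable (\<lambda>k. (c k)\<^sup>2 * real k ^ (2 * n))"
proof (rule summable_comparison_test[OF _ summable_mult[OF s, of \<gamma>]])
  show "\<exists>N. \<forall>k\<ge>N. norm ((c k)\<^sup>2 * real k ^ (2 * n)) \<le> \<gamma> * ((c k)\<^sup>2 / r_weight (real n) \<gamma> k)"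
  proof (intro exI allI impI)
    fix k :: nat assume "k \<ge> 0"
    show "norm ((c k)\<^sup>2 * real k ^ (2 * n)) \<le> \<gamma> * ((c k)\<^sup>2 / r_weight (real n) \<gamma> k)"
    proof (cases "k = 0")
      case True
      have "(0::real) ^ (2 * n) = 0" using n by simp
      then show ?thesis using g n True by (simp add: r_weight_def power_0_left)
    next
      case False
      then show ?thesis using g rw_nat[of k n \<gamma>] by simp
    qed
  qed
qed

lemma bridge_sum:
  fixes c :: "nat \<Rightarrow> real"
  assumes s: "summable (\<lambda>k. (c k)\<^sup>2 * real k ^ (2 * n))" and g: "\<gamma> > 0" and n: "n \<ge> 1"
  shows "(\<Sum>k. (c k)\<^sup>2 / r_weight (real n) \<gamma> k) = (c 0)\<^sup>2 + (\<Sum>k. (c k)\<^sup>2 * real k ^ (2 * n)) / \<gamma>"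
proof -
  have e: "(c k)\<^sup>2 / r_weight (real n) \<gamma> k = (if k = 0 then (c 0)\<^sup>2 else 0) + (1 / \<gamma>) * ((c k)\<^sup>2 * real k ^ (2 * n))" for k
  proof (cases "k = 0")
    case True then show ?thesis using n by (simp add: r_weight_def)
  next
    case False then show ?thesis using rw_nat[of k n \<gamma>] g by simp
  qed
  have "(\<lambda>k. (if k = 0 then (c 0)\<^sup>2 else 0) + (1 / \<gamma>) * ((c k)\<^sup>2 * real k ^ (2 * n)))
        sums ((c 0)\<^sup>2 + (1 / \<gamma>) * (\<Sum>k. (c k)\<^sup>2 * real k ^ (2 * n)))"
    using sums_single[of 0 "\<lambda>_. (c 0)\<^sup>2"] by (intro sums_add sums_mult summable_sums s) simp
  then show ?thesis unfolding e by (simp add: sums_iff)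
qed

context cs_f
begin

lemma total_bound:
  assumes g: "\<gamma> > 0" and D: "sob_derivs a f D"
  shows "(LINT x:{0..1}|lborel. f x)\<^sup>2 + (1 / \<gamma>) * (\<Sum>\<tau>=1..a - 1. (LINT x:{0..1}|lborel. D \<tau> x)\<^sup>2)
          + (1 / \<gamma>) * (LINT x:{0..1}|lborel. (D a x)\<^sup>2)
        \<le> (\<Sum>i<Suc a. (pi\<^sup>2) ^ i) * ((c 0)\<^sup>2 + Acoef / \<gamma>)"
proof -
  define S1 where "S1 = (\<Sum>\<tau>=1..a - 1. pi ^ (2 * \<tau>))"
  have pi9: "pi\<^sup>2 \<ge> 9"
  proof -
    have "3 * 3 \<le> pi * pi" using pi_gt3 by (intro mult_mono) auto
    then show ?thesis by (simp add: power2_eq_square)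
  qed
  have b1: "(\<Sum>\<tau>=1..a - 1. (LINT x:{0..1}|lborel. D \<tau> x)\<^sup>2) \<le> S1 * Acoef"
  proof -
    have "(\<Sum>\<tau>=1..a - 1. (LINT x:{0..1}|lborel. D \<tau> x)\<^sup>2) \<le> (\<Sum>\<tau>=1..a - 1. pi ^ (2 * \<tau>) * Acoef)"
    proof (rule sum_mono)
      fix \<tau> assume t: "\<tau> \<in> {1..a - 1}"
      have "(LINT x:{0..1}|lborel. D \<tau> x)\<^sup>2 \<le> 8 * pi ^ (2 * (\<tau> - 1)) * (pi\<^sup>2 / 24 + 3 / 4) * Acoef"
        using int_Dtau[OF D] t by auto
      also have "\<dots> = (pi ^ (2 * (\<tau> - 1)) * (pi\<^sup>2 / 3 + 6)) * Acoef" by (simp add: field_simps)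
      also have "\<dots> \<le> (pi ^ (2 * (\<tau> - 1)) * pi\<^sup>2) * Acoef"
        using pi9 by (intro mult_right_mono mult_left_mono Acoef_nonneg) auto
      also have "pi ^ (2 * (\<tau> - 1)) * pi\<^sup>2 = pi ^ (2 * \<tau>)"
      proof -
        have "2 * \<tau> = 2 * (\<tau> - 1) + 2" using t by auto
        then show ?thesis by (simp only: power_add)
      qed
      finally show "(LINT x:{0..1}|lborel. D \<tau> x)\<^sup>2 \<le> pi ^ (2 * \<tau>) * Acoef" .
    qed
    then show ?thesis by (simp add: S1_def sum_distrib_right)
  qed
  have b2: "(LINT x:{0..1}|lborel. (D a x)\<^sup>2) \<le> pi ^ (2 * a) * Acoef"
    using Da_bound[OF D] suminf_w by simp
  have C: "(\<Sum>i<Suc a. (pi\<^sup>2) ^ i) = 1 + S1 + pi ^ (2 * a)"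
  proof -
    have u: "{..<a} = insert 0 {1..a - 1}" using a2 by auto
    have "(\<Sum>i<Suc a. (pi\<^sup>2) ^ i) = (\<Sum>i<a. (pi\<^sup>2) ^ i) + (pi\<^sup>2) ^ a" by simp
    also have "(\<Sum>i<a. (pi\<^sup>2) ^ i) = 1 + (\<Sum>i=1..a - 1. (pi\<^sup>2) ^ i)" unfolding u by (subst sum.insert) auto
    finally show ?thesis by (simp add: S1_def power_mult)
  qed
  have S1nn: "S1 \<ge> 0" unfolding S1_def by (intro sum_nonneg) simp
  have An: "Acoef \<ge> 0" by (rule Acoef_nonneg)
  have "(LINT x:{0..1}|lborel. f x)\<^sup>2 + (1 / \<gamma>) * (\<Sum>\<tau>=1..a - 1. (LINT x:{0..1}|lborel. D \<tau> x)\<^sup>2)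
          + (1 / \<gamma>) * (LINT x:{0..1}|lborel. (D a x)\<^sup>2)
      \<le> (c 0)\<^sup>2 + (1 / \<gamma>) * (S1 * Acoef) + (1 / \<gamma>) * (pi ^ (2 * a) * Acoef)"
    using b1 b2 g int_f by (intro add_mono mult_left_mono) auto
  also have "\<dots> = (c 0)\<^sup>2 + (S1 + pi ^ (2 * a)) * (Acoef / \<gamma>)" using g by (simp add: field_simps)
  also have "\<dots> \<le> (1 + S1 + pi ^ (2 * a)) * ((c 0)\<^sup>2 + Acoef / \<gamma>)"
  proof -
    have "0 \<le> (S1 + pi ^ (2 * a)) * (c 0)\<^sup>2 + Acoef / \<gamma>" using S1nn An g by auto
    then show ?thesis by (simp add: algebra_simps)
  qed
  finally show ?thesis unfolding C .
qed

end


lemma sub_odd_summable: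
  fixes f :: "nat \<Rightarrow> real"
  assumes nn: "\<And>k. f k \<ge> 0" and s: "summable f"
  shows "summable (\<lambda>n. f (2 * n + 1))"
proof (rule summableI_nonneg_bounded)
  show "0 \<le> f (2 * n + 1)" for n by (rule nn)
  fix N
  have "(\<Sum>n<N. f (2 * n + 1)) = sum f ((\<lambda>n. 2 * n + 1) ` {..<N})"
    by (subst sum.reindex) (auto simp: inj_on_def)
  also have "\<dots> \<le> sum f {..<2 * N}" by (intro sum_mono2) (auto simp: nn)
  also have "\<dots> \<le> suminf f" by (intro sum_le_suminf s) (auto simp: nn)
  finally show "(\<Sum>n<N. f (2 * n + 1)) \<le> suminf f" .
qed

lemma x_coeff:
  assumes "odd m"
  shows "(LINT x:{0..1}|lborel. x * cos_basis m x) = - (2 * sqrt 2) / (pi * real m)\<^sup>2"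
proof -
  have m: "m \<noteq> 0" "real m \<noteq> 0" using odd_pos[OF assms] by auto
  define G where "G x = x * sin (pi * real m * x) / (pi * real m) + cos (pi * real m * x) / (pi * real m)\<^sup>2" for x
  have d: "(G has_real_derivative (x * cos (pi * real m * x))) (at x)" for x
    unfolding G_def[abs_def] using m by (auto intro!: derivative_eq_intros simp: field_simps power2_eq_square)
  have "(LINT x:{0..1}|lborel. x * cos (pi * real m * x)) = G 1 - G 0"
    by (rule FTC_Icc[OF _ d]) (auto intro!: continuous_intros)
  also have "\<dots> = - 2 / (pi * real m)\<^sup>2"
  proof -
    have "m > 0" using m by simp
    then show ?thesis using assms by (simp add: G_def)
  qed
  finally have I: "(LINT x:{0..1}|lborel. x * cos (pi * real m * x)) = - 2 / (pi * real m)\<^sup>2" .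
  have "(LINT x:{0..1}|lborel. x * cos_basis m x) = (LINT x:{0..1}|lborel. sqrt 2 * (x * cos (pi * real m * x)))"
    using m by (simp add: cos_basis_def mult_ac)
  also have "\<dots> = sqrt 2 * (LINT x:{0..1}|lborel. x * cos (pi * real m * x))" by simp
  finally show ?thesis using I by simp
qed

lemma aux_alg: fixes N :: real assumes "N \<noteq> 0"
  shows "(- (2 * sqrt 2) / (pi * N)\<^sup>2)\<^sup>2 * N ^ 3 = (8 / pi ^ 4) * (1 / N)"
proof -
  have "(- (2 * sqrt 2) / (pi * N)\<^sup>2)\<^sup>2 = (2 * sqrt 2)\<^sup>2 / ((pi * N)\<^sup>2)\<^sup>2"
    by (simp add: power_divide)
  also have "(2 * sqrt 2)\<^sup>2 = (8::real)" by (simp add: power_mult_distrib)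
  also have "((pi * N)\<^sup>2)\<^sup>2 = pi ^ 4 * N ^ 4" by (simp add: power_mult_distrib power_mult[symmetric])
  finally have e: "(- (2 * sqrt 2) / (pi * N)\<^sup>2)\<^sup>2 = 8 / (pi ^ 4 * N ^ 4)" .
  show ?thesis unfolding e using assms by (simp add: field_simps power_add[symmetric] eval_nat_numeral)
qed

lemma x_notin:
  fixes b \<gamma> :: real
  assumes b: "b \<ge> 3/2" and g: "\<gamma> > 0"
  shows "(\<lambda>x. x) \<notin> H_cos b \<gamma>"
proof
  assume "(\<lambda>x. x) \<in> H_cos b \<gamma>"
  then obtain c :: "nat \<Rightarrow> real" where s1: "summable (\<lambda>k. (c k)\<^sup>2 / r_weight b \<gamma> k)"
    and s2: "\<forall>x\<in>{0..1}. (\<lambda>k. c k * cos_basis k x) sums x"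
    unfolding H_cos_def by blast
  have s3: "summable (\<lambda>k. (c k)\<^sup>2 * real k ^ 3)"
  proof (rule summable_comparison_test_ev[OF _ summable_mult[OF s1, of \<gamma>]])
    show "\<forall>\<^sub>F k in sequentially. norm ((c k)\<^sup>2 * real k ^ 3) \<le> \<gamma> * ((c k)\<^sup>2 / r_weight b \<gamma> k)"
      using eventually_ge_at_top[of "1::nat"]
    proof eventually_elim
      case (elim k)
      have k: "real k \<ge> 1" using elim by simp
      have "real k ^ 3 = real k powr 3" using k by simp
      also have "\<dots> \<le> real k powr (2 * b)" using b k by (intro powr_mono) auto
      finally have p: "real k ^ 3 \<le> real k powr (2 * b)" .
      have "\<gamma> * ((c k)\<^sup>2 / r_weight b \<gamma> k) = (c k)\<^sup>2 * real k powr (2 * b)"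
        using rw_pos[OF elim, of b \<gamma>] g k by simp
      moreover have "(c k)\<^sup>2 * real k ^ 3 \<le> (c k)\<^sup>2 * real k powr (2 * b)"
        using p by (intro mult_left_mono) auto
      ultimately show ?case by simp
    qed
  qed
  have sc: "summable (\<lambda>k. \<bar>c k\<bar>)"
  proof (rule summable_comparison_test_ev)
    show "summable (\<lambda>k. (c k)\<^sup>2 * real k ^ 3 + inverse (real k ^ 2))"
      by (intro summable_add s3 inverse_power_summable) simp
    show "\<forall>\<^sub>F k in sequentially. norm \<bar>c k\<bar> \<le> (c k)\<^sup>2 * real k ^ 3 + inverse (real k ^ 2)"
      using eventually_ge_at_top[of "1::nat"]
    proof eventually_elim
      case (elim k)
      have k: "real k \<ge> 1" using elim by simp
      have "\<bar>c k\<bar> = (\<bar>c k\<bar> * real k) / real k" using k by simp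
      also have "\<dots> \<le> (\<bar>c k\<bar> * real k)\<^sup>2 + inverse (real k ^ 2)" by (rule amgm_k) (use elim in auto)
      also have "(\<bar>c k\<bar> * real k)\<^sup>2 = (c k)\<^sup>2 * real k ^ 2" by (simp add: power_mult_distrib)
      also have "\<dots> \<le> (c k)\<^sup>2 * real k ^ 3" using k by (intro mult_left_mono power_increasing) auto
      finally show ?case by simp
    qed
  qed
  have cm: "c m = - (2 * sqrt 2) / (pi * real m)\<^sup>2" if "odd m" for m
    using coeff_extract[OF sc s2, of m] x_coeff[OF that] by simp
  have "summable (\<lambda>n. (c (2 * n + 1))\<^sup>2 * real (2 * n + 1) ^ 3)"
    using sub_odd_summable[of "\<lambda>k. (c k)\<^sup>2 * real k ^ 3", OF _ s3] by simp
  moreover have "(c (2 * n + 1))\<^sup>2 * real (2 * n + 1) ^ 3 = (8 / pi ^ 4) * (1 / real (2 * n + 1))" for n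
  proof -
    have o: "odd (2 * n + 1)" by simp
    have r: "real (2 * n + 1) \<noteq> 0" by simp
    show ?thesis unfolding cm[OF o] by (rule aux_alg[OF r])
  qed
  ultimately have "summable (\<lambda>n. (8 / pi ^ 4) * (1 / real (2 * n + 1)))" by simp
  then have "summable (\<lambda>n. (pi ^ 4 / 8) * ((8 / pi ^ 4) * (1 / real (2 * n + 1))))"
    by (rule summable_mult)
  then have s4: "summable (\<lambda>n. 1 / real (2 * n + 1))" by simp
  have "summable (\<lambda>n. inverse (real (Suc n)))"
  proof (rule summable_comparison_test[OF _ summable_mult[OF s4, of 2]])
    show "\<exists>N. \<forall>n\<ge>N. norm (inverse (real (Suc n))) \<le> 2 * (1 / real (2 * n + 1))"
      by (intro exI allI impI) (simp add: field_simps)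
  qed
  then have "summable (\<lambda>n. inverse (real n))" by (subst (asm) summable_Suc_iff)
  then show False using not_summable_harmonic[where 'a=real] by simp
qed



lemma x_in_sob: "\<alpha> \<ge> 2 \<Longrightarrow> (\<lambda>x. x) \<in> H_sob \<alpha>"
proof -
  assume a: "\<alpha> \<ge> 2"
  define D :: "nat \<Rightarrow> real \<Rightarrow> real" where
    "D \<tau> = (if \<tau> = 0 then (\<lambda>x. x) else if \<tau> = 1 then (\<lambda>_. 1) else (\<lambda>_. 0))" for \<tau>
  have "sob_derivs \<alpha> (\<lambda>x. x) D"
    unfolding sob_derivs_def
  proof (intro conjI ballI allI impI)
    show "D 0 x = x" for x by (simp add: D_def)
    show "(D \<tau> has_real_derivative D (Suc \<tau>) x) (at x within {0..1})" if "\<tau> < \<alpha> - 1" for \<tau> x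
    proof (cases "\<tau> = 0")
      case True then show ?thesis by (simp add: D_def)
    next
      case False
      then have "D \<tau> = (\<lambda>_. if \<tau> = 1 then 1 else 0)" "D (Suc \<tau>) x = 0" by (auto simp: D_def fun_eq_iff)
      then show ?thesis by simp
    qed
    have Da: "D \<alpha> = (\<lambda>_. 0)" using a by (simp add: D_def fun_eq_iff)
    show "D \<alpha> \<in> borel_measurable lborel" unfolding Da by simp
    show "set_integrable lborel {0..1} (\<lambda>x. (D \<alpha> x)\<^sup>2)" unfolding Da by (simp add: set_integrable_def)
    show "D (\<alpha> - 1) x = D (\<alpha> - 1) 0 + (LINT t:{0..x}|lborel. D \<alpha> t)" for x
      unfolding Da using a by (simp add: D_def)
  qed
  then show ?thesis unfolding H_sob_def by blast
qed

lemma norm_part: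
  fixes \<alpha> :: nat and \<gamma> :: real
  assumes a: "\<alpha> \<ge> 2" and g: "\<gamma> > 0" and fH: "f \<in> H_cos (real \<alpha>) \<gamma>"
  shows "f \<in> H_sob \<alpha> \<and> sob_norm \<alpha> \<gamma> f \<le> sqrt ((pi ^ (2 * (\<alpha> + 1)) - 1) / (pi\<^sup>2 - 1)) * cos_norm (real \<alpha>) \<gamma> f"
proof -
  obtain c :: "nat \<Rightarrow> real" where s1: "summable (\<lambda>k. (c k)\<^sup>2 / r_weight (real \<alpha>) \<gamma> k)"
    and s2: "\<forall>x\<in>{0..1}. (\<lambda>k. c k * cos_basis k x) sums f x"
    using fH unfolding H_cos_def by blast
  have sA: "summable (\<lambda>k. (c k)\<^sup>2 * real k ^ (2 * \<alpha>))"
    by (rule bridge_summable[OF s1 g]) (use a in simp)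
  interpret cs_f \<alpha> c f
    by unfold_locales (use a sA s2 in auto)
  have inS: "f \<in> H_sob \<alpha>" using sob_ex unfolding H_sob_def by blast
  define D where "D = (SOME D. sob_derivs \<alpha> f D)"
  have DD: "sob_derivs \<alpha> f D" unfolding D_def by (rule someI_ex[OF sob_ex])
  define X where "X = (LINT x:{0..1}|lborel. f x)\<^sup>2 + (1 / \<gamma>) * (\<Sum>\<tau>=1..\<alpha> - 1. (LINT x:{0..1}|lborel. D \<tau> x)\<^sup>2)
          + (1 / \<gamma>) * (LINT x:{0..1}|lborel. (D \<alpha> x)\<^sup>2)"
  have sn: "sob_norm \<alpha> \<gamma> f = sqrt X"
    unfolding sob_norm_def Let_def X_def D_def ..
  define C where "C = (\<Sum>i<Suc \<alpha>. (pi\<^sup>2) ^ i)"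
  define Y where "Y = (c 0)\<^sup>2 + Acoef / \<gamma>"
  have XY: "X \<le> C * Y" unfolding X_def C_def Y_def by (rule total_bound[OF g DD])
  have cc: "cos_coeff f k = c k" for k
    unfolding cos_coeff_def by (rule coeff_extract[OF _ s2]) (use summable_abs_pow[of 0] in simp)
  have cn: "cos_norm (real \<alpha>) \<gamma> f = sqrt Y"
    unfolding cos_norm_def cc Y_def Acoef_def by (subst bridge_sum[OF sA g]) (use a in auto)
  have pi1: "pi\<^sup>2 \<noteq> 1"
  proof -
    have "pi\<^sup>2 > 1" using pi_gt3 by (simp add: power2_eq_square) (smt (verit) mult_less_cancel_right1 pi_gt3)
    then show ?thesis by simp
  qed
  have Ceq: "C = (pi ^ (2 * (\<alpha> + 1)) - 1) / (pi\<^sup>2 - 1)"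
  proof -
    have "(pi\<^sup>2) ^ (Suc \<alpha>) = pi ^ (2 * (\<alpha> + 1))" by (simp only: power_mult Suc_eq_plus1)
    then show ?thesis unfolding C_def geometric_sum[OF pi1] by (simp add: power2_eq_square)
  qed
  have Cnn: "C \<ge> 0" unfolding C_def by (intro sum_nonneg) simp
  have Ynn: "Y \<ge> 0" unfolding Y_def using Acoef_nonneg g by simp
  have "sqrt X \<le> sqrt (C * Y)" using XY by simp
  also have "\<dots> = sqrt C * sqrt Y" by (simp add: real_sqrt_mult)
  finally show ?thesis using inS sn cn Ceq by simp
qed

theorem mainTheorem3:
  fixes \<alpha> :: nat and \<gamma> :: real
  assumes "\<alpha> \<ge> 2" and "\<gamma> > 0"
  shows "H_cos (real \<alpha>) \<gamma> \<subseteq> H_sob \<alpha>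
     \<and> (\<forall>f\<in>H_cos (real \<alpha>) \<gamma>.
           sob_norm \<alpha> \<gamma> f \<le> sqrt ((pi ^ (2 * (\<alpha> + 1)) - 1) / (pi\<^sup>2 - 1)) * cos_norm (real \<alpha>) \<gamma> f)
     \<and> (\<lambda>x. x) \<in> H_sob \<alpha>
     \<and> (\<lambda>x. x) \<notin> H_cos (real \<alpha>) \<gamma>
     \<and> (\<forall>a::real. a \<ge> 3/2 \<longrightarrow> (\<lambda>x. x) \<notin> H_cos a \<gamma>)"
proof (intro conjI)
  show "H_cos (real \<alpha>) \<gamma> \<subseteq> H_sob \<alpha>" using norm_part[OF assms] by blast
  show "\<forall>f\<in>H_cos (real \<alpha>) \<gamma>.
           sob_norm \<alpha> \<gamma> f \<le> sqrt ((pi ^ (2 * (\<alpha> + 1)) - 1) / (pi\<^sup>2 - 1)) * cos_norm (real \<alpha>) \<gamma> f"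
    using norm_part[OF assms] by blast
  show "(\<lambda>x. x) \<in> H_sob \<alpha>" by (rule x_in_sob[OF assms(1)])
  show "(\<lambda>x. x) \<notin> H_cos (real \<alpha>) \<gamma>" by (rule x_notin) (use assms in auto)
  show "\<forall>a::real. a \<ge> 3/2 \<longrightarrow> (\<lambda>x. x) \<notin> H_cos a \<gamma>" using x_notin assms(2) by blast
qed


end
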